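(* Let $\mathcal M$ be a Type $\mathcal A$ affine surface geometry and let $\mathcal Q_c:=\mathcal Q(\mathcal M)\otimes_{\mathbb R}\mathbb C$. (1) $\mathcal Q_c$ has a basis consisting of functions of the form $e^{\alpha_1x^1+\alpha_2x^2}p(x^1,x^2)$, where $(\alpha_1,\alpha_2)\in\mathbb C^2$, $p$ is a (complex) polynomial of degree at most $2$ in $(x^1,x^2)$, and $e^{\alpha_1x^1+\alpha_2x^2}\in\mathcal Q_c$. (2) There exist real linear functions $L_1,L_2,L_3$, a real polynomial $Q$ of degree at most $2$, and a basis $\mathcal B$ of $\mathcal Q(\mathcal M)$ of one of the following four forms: $\mathcal B=\{e^{L_1}\cos(L_2),e^{L_1}\sin(L_2),e^{L_3}\}$, $\mathcal B=\{e^{L_1},e^{L_2},e^{L_3}\}$, $\mathcal B=\{e^{L_1},L_2e^{L_1},e^{L_3}\}$, or $\mathcal B=\{e^{L_1},L_2e^{L_1},Qe^{L_1}\}$.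
   Context: An affine manifold $(M,\nabla)$ is a smooth manifold $M$ of dimension $m\ge 2$ with a torsion-free connection $\nabla$ on $TM$; in local coordinates $\nabla_{\partial_{x^i}}\partial_{x^j}=\Gamma_{ij}^k\partial_{x^k}$ (summation over repeated indices). The curvature is $R(X,Y)Z=\nabla_X\nabla_YZ-\nabla_Y\nabla_XZ-\nabla_{[X,Y]}Z$, the Ricci tensor is $\rho(Y,Z)=\mathrm{Tr}(X\mapsto R(X,Y)Z)$, and $\rho_s(X,Y)=\frac12(\rho(X,Y)+\rho(Y,X))$. The Hessian is $\mathcal H_\nabla f=(\partial_{x^i}\partial_{x^j}f-\Gamma_{ij}^k\partial_{x^k}f)\,dx^i\otimes dx^j$. The quasi-Einstein solution space is $\mathcal Q(M,\nabla)=\{f\in C^\infty(M):\mathcal H_\nabla f+\frac{1}{m-1}f\rho_s=0\}$. For real constants, $\Gamma(a,b,c,d,e,f)$ denotes the connection on (an open subset of) $\mathbb R^2$ whose Christoffel symbols in the standard coordinates $(x^1,x^2)$ are the constants $\Gamma_{11}^1=a$, $\Gamma_{11}^2=b$, $\Gamma_{12}^1=\Gamma_{21}^1=c$, $\Gamma_{12}^2=\Gamma_{21}^2=d$, $\Gamma_{22}^1=e$, $\Gamma_{22}^2=f$. A Type $\mathcal A$ affine surface geometry is $(\mathbb R^2,\Gamma(a,b,c,d,e,f))$. A (real) linear function is a function $L(x^1,x^2)=\alpha_1x^1+\alpha_2x^2$ with $\alpha_1,\alpha_2\in\mathbb R$. *)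

theory Defs
  imports "HOL-Analysis.Analysis"
begin

text \<open>Points of the affine surface R^2 are pairs (x1,x2). Coordinate indices are 1 and 2.\<close>

definition pd :: "nat \<Rightarrow> (real \<times> real \<Rightarrow> real) \<Rightarrow> real \<times> real \<Rightarrow> real" where
  "pd i u = (\<lambda>(x, y). if i = 1 then deriv (\<lambda>t. u (t, y)) x else deriv (\<lambda>t. u (x, t)) y)"

text \<open>C^infinity functions on R^2: differentiable everywhere, with both partial
  derivatives again C^infinity (coinductively).\<close>
coinductive smooth2 :: "(real \<times> real \<Rightarrow> real) \<Rightarrow> bool" where
  "(\<forall>p. u differentiable (at p)) \<Longrightarrow> smooth2 (pd 1 u) \<Longrightarrow> smooth2 (pd 2 u) \<Longrightarrow> smooth2 u"

text \<open>A connection on (an open subset of) R^2 given by its Christoffel symbols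
  G i j k p = Gamma_ij^k at the point p.\<close>
type_synonym christoffel = "nat \<Rightarrow> nat \<Rightarrow> nat \<Rightarrow> real \<times> real \<Rightarrow> real"

definition idx :: "nat set" where "idx = {1, 2}"

text \<open>R(d_i,d_j)d_k = R_ijk^l d_l\<close>
definition curv :: "christoffel \<Rightarrow> nat \<Rightarrow> nat \<Rightarrow> nat \<Rightarrow> nat \<Rightarrow> real \<times> real \<Rightarrow> real" where
  "curv G i j k l p = pd i (G j k l) p - pd j (G i k l) p
     + (\<Sum>n\<in>idx. G j k n p * G i n l p - G i k n p * G j n l p)"

definition ricci :: "christoffel \<Rightarrow> nat \<Rightarrow> nat \<Rightarrow> real \<times> real \<Rightarrow> real" where
  "ricci G j k p = (\<Sum>i\<in>idx. curv G i j k i p)"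

definition ricci_s :: "christoffel \<Rightarrow> nat \<Rightarrow> nat \<Rightarrow> real \<times> real \<Rightarrow> real" where
  "ricci_s G j k p = (ricci G j k p + ricci G k j p) / 2"

definition hess :: "christoffel \<Rightarrow> (real \<times> real \<Rightarrow> real) \<Rightarrow> nat \<Rightarrow> nat \<Rightarrow> real \<times> real \<Rightarrow> real" where
  "hess G u i j p = pd i (pd j u) p - (\<Sum>k\<in>idx. G i j k p * pd k u p)"

text \<open>Quasi-Einstein solution space, m = dim M = 2.\<close>
definition QE :: "christoffel \<Rightarrow> (real \<times> real \<Rightarrow> real) set" where
  "QE G = {u. smooth2 u \<and>
     (\<forall>i\<in>idx. \<forall>j\<in>idx. \<forall>p. hess G u i j p + (1 / (real 2 - 1)) * u p * ricci_s G i j p = 0)}"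

text \<open>Complexification Q \<otimes>_R C, realised as complex-valued functions g + i h with g, h in Q.\<close>
definition QEc :: "christoffel \<Rightarrow> (real \<times> real \<Rightarrow> complex) set" where
  "QEc G = {(\<lambda>p. complex_of_real (g p) + \<i> * complex_of_real (h p)) | g h. g \<in> QE G \<and> h \<in> QE G}"

definition GammaA :: "real \<Rightarrow> real \<Rightarrow> real \<Rightarrow> real \<Rightarrow> real \<Rightarrow> real \<Rightarrow> christoffel" where
  "GammaA a b c d e f = (\<lambda>i j k p.
     if i = 1 \<and> j = 1 then (if k = 1 then a else b)
     else if i = 2 \<and> j = 2 then (if k = 1 then e else f)
     else (if k = 1 then c else d))"

definition fin_basis :: "('x \<Rightarrow> 'k::field) set \<Rightarrow> ('x \<Rightarrow> 'k) set \<Rightarrow> bool" where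
  "fin_basis S B \<longleftrightarrow> finite B \<and> B \<subseteq> S
     \<and> (\<forall>u\<in>S. \<exists>c. u = (\<lambda>p. \<Sum>b\<in>B. c b * b p))
     \<and> (\<forall>c. (\<lambda>p. \<Sum>b\<in>B. c b * b p) = (\<lambda>p. 0) \<longrightarrow> (\<forall>b\<in>B. c b = 0))"

definition real_linear_fn :: "(real \<times> real \<Rightarrow> real) \<Rightarrow> bool" where
  "real_linear_fn L \<longleftrightarrow> (\<exists>\<alpha>1 \<alpha>2. L = (\<lambda>(x, y). \<alpha>1 * x + \<alpha>2 * y))"

definition real_poly_deg2 :: "(real \<times> real \<Rightarrow> real) \<Rightarrow> bool" where
  "real_poly_deg2 Q \<longleftrightarrow> (\<exists>c0 c1 c2 c3 c4 c5.
     Q = (\<lambda>(x, y). c0 + c1 * x + c2 * y + c3 * x\<^sup>2 + c4 * x * y + c5 * y\<^sup>2))"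

end

theory Submission
  imports Defs
begin

definition pol :: "(nat \<Rightarrow> complex) \<Rightarrow> complex \<Rightarrow> complex \<Rightarrow> complex" where
  "pol c x y = c 0 + c 1 * x + c 2 * y + c 3 * x^2 + c 4 * x * y + c 5 * y^2"

definition EP :: "complex \<Rightarrow> complex \<Rightarrow> (nat \<Rightarrow> complex) \<Rightarrow> real \<times> real \<Rightarrow> complex" where
  "EP a1 a2 c = (\<lambda>(x,y). exp (a1 * of_real x + a2 * of_real y) * pol c (of_real x) (of_real y))"

definition dXc :: "complex \<Rightarrow> (nat \<Rightarrow> complex) \<Rightarrow> nat \<Rightarrow> complex" where
  "dXc a1 c = (\<lambda>k. if k = 0 then a1 * c 0 + c 1 else if k = 1 then a1 * c 1 + 2 * c 3
     else if k = 2 then a1 * c 2 + c 4 else a1 * c k)"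

definition dYc :: "complex \<Rightarrow> (nat \<Rightarrow> complex) \<Rightarrow> nat \<Rightarrow> complex" where
  "dYc a2 c = (\<lambda>k. if k = 0 then a2 * c 0 + c 2 else if k = 1 then a2 * c 1 + c 4
     else if k = 2 then a2 * c 2 + 2 * c 5 else a2 * c k)"

lemma lin_deriv:
  "((\<lambda>p::real\<times>real. a1 * complex_of_real (fst p) + a2 * complex_of_real (snd p)) has_derivative
     (\<lambda>p. a1 * complex_of_real (fst p) + a2 * complex_of_real (snd p))) (at z)"
  by (auto intro!: derivative_eq_intros)

lemma exp_lin_deriv:
  "((\<lambda>p::real\<times>real. exp (a1 * complex_of_real (fst p) + a2 * complex_of_real (snd p))) has_derivative
     (\<lambda>p. exp (a1 * complex_of_real (fst z) + a2 * complex_of_real (snd z)) * (a1 * complex_of_real (fst p) + a2 * complex_of_real (snd p)))) (at z)"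
  using has_derivative_compose[OF lin_deriv DERIV_exp[unfolded has_field_derivative_def]] by simp

lemma EP_deriv:
  "(EP a1 a2 c has_derivative (\<lambda>(h,k). of_real h * EP a1 a2 (dXc a1 c) (x,y) + of_real k * EP a1 a2 (dYc a2 c) (x,y))) (at (x,y))"
proof -
  have "((\<lambda>p. exp (a1 * of_real (fst p) + a2 * of_real (snd p)) * pol c (of_real (fst p)) (of_real (snd p)))
     has_derivative (\<lambda>(h,k). of_real h * EP a1 a2 (dXc a1 c) (x,y) + of_real k * EP a1 a2 (dYc a2 c) (x,y))) (at (x,y))"
    unfolding pol_def
    apply (rule derivative_eq_intros exp_lin_deriv refl)+
    apply (simp add: EP_def pol_def dXc_def dYc_def fun_eq_iff)
    apply (simp add: algebra_simps power2_eq_square)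
    done
  then show ?thesis by (simp add: EP_def case_prod_beta')
qed

definition RE :: "complex \<Rightarrow> complex \<Rightarrow> (nat \<Rightarrow> complex) \<Rightarrow> real \<times> real \<Rightarrow> real" where
  "RE a1 a2 c = (\<lambda>p. Re (EP a1 a2 c p))"

lemma RE_deriv:
  "(RE a1 a2 c has_derivative (\<lambda>(h,k). h * RE a1 a2 (dXc a1 c) (x,y) + k * RE a1 a2 (dYc a2 c) (x,y))) (at (x,y))"
proof -
  have "((\<lambda>p. Re (EP a1 a2 c p)) has_derivative (\<lambda>p. Re ((\<lambda>(h,k). of_real h * EP a1 a2 (dXc a1 c) (x,y) + of_real k * EP a1 a2 (dYc a2 c) (x,y)) p))) (at (x,y))"
    by (rule has_derivative_Re[OF EP_deriv])
  then show ?thesis unfolding RE_def by (simp add: case_prod_beta')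
qed

lemma line1:
  assumes "(u has_derivative (\<lambda>(h,k). h * A + k * B)) (at (x,y))"
  shows "((\<lambda>t. u (t,y)) has_real_derivative A) (at x)"
proof -
  have i: "((\<lambda>t::real. (t, y)) has_derivative (\<lambda>h. (h, 0))) (at x)"
    by (auto intro!: derivative_eq_intros)
  have "((\<lambda>t. u (t,y)) has_derivative (\<lambda>h. (\<lambda>(h,k). h * A + k * B) (h, 0))) (at x)"
    using has_derivative_compose[OF i assms] by simp
  moreover have "(\<lambda>h. (\<lambda>(h,k). h * A + k * B) (h, 0)) = (\<lambda>h. A * h)" by auto
  ultimately show ?thesis by (simp add: has_field_derivative_def)
qed

lemma line2:
  assumes "(u has_derivative (\<lambda>(h,k). h * A + k * B)) (at (x,y))"
  shows "((\<lambda>t. u (x,t)) has_real_derivative B) (at y)"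
proof -
  have i: "((\<lambda>t::real. (x, t)) has_derivative (\<lambda>h. (0, h))) (at y)"
    by (auto intro!: derivative_eq_intros)
  have "((\<lambda>t. u (x,t)) has_derivative (\<lambda>h. (\<lambda>(h,k). h * A + k * B) (0, h))) (at y)"
    using has_derivative_compose[OF i assms] by simp
  moreover have "(\<lambda>h. (\<lambda>(h,k). h * A + k * B) (0, h)) = (\<lambda>h. B * h)" by auto
  ultimately show ?thesis by (simp add: has_field_derivative_def)
qed

lemma pd1_eq:
  assumes "\<And>x y. (u has_derivative (\<lambda>(h,k). h * A (x,y) + k * B (x,y))) (at (x,y))"
  shows "pd 1 u = A"
  unfolding pd_def using line1[OF assms] by (auto simp: fun_eq_iff DERIV_imp_deriv)

lemma pd2_eq:
  assumes "\<And>x y. (u has_derivative (\<lambda>(h,k). h * A (x,y) + k * B (x,y))) (at (x,y))"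
  shows "pd 2 u = B"
  unfolding pd_def using line2[OF assms] by (auto simp: fun_eq_iff DERIV_imp_deriv)

lemma pd1_RE: "pd 1 (RE a1 a2 c) = RE a1 a2 (dXc a1 c)"
  by (rule pd1_eq[OF RE_deriv])

lemma pd2_RE: "pd 2 (RE a1 a2 c) = RE a1 a2 (dYc a2 c)"
  by (rule pd2_eq[OF RE_deriv])

lemma smooth2_RE: "smooth2 (RE a1 a2 c)"
proof -
  let ?X = "\<lambda>u. \<exists>a1 a2 c. u = RE a1 a2 c"
  have diff: "RE a1 a2 c differentiable (at p)" for a1 a2 c p
    unfolding differentiable_def
    using RE_deriv[of a1 a2 c "fst p" "snd p"] unfolding prod.collapse by blast
  have "?X u \<Longrightarrow> smooth2 u" for u
    apply (erule smooth2.coinduct)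
    apply (elim exE)
    subgoal for u a1 a2 c
      apply (rule exI[of _ u])
      apply hypsubst
      apply (simp only: diff pd1_RE pd2_RE simp_thms)
      apply blast
      done
    done
  then show ?thesis by blast
qed

lemma pd_const: "pd i (\<lambda>p. k) = (\<lambda>p. 0)"
  unfolding pd_def by (auto simp: fun_eq_iff)

definition r11 :: "real \<Rightarrow> real \<Rightarrow> real \<Rightarrow> real \<Rightarrow> real \<Rightarrow> real \<Rightarrow> real" where
  "r11 a b c d e f = a*d + b*f - b*c - d^2"
definition r12 :: "real \<Rightarrow> real \<Rightarrow> real \<Rightarrow> real \<Rightarrow> real \<Rightarrow> real \<Rightarrow> real" where
  "r12 a b c d e f = c*d - b*e"
definition r22 :: "real \<Rightarrow> real \<Rightarrow> real \<Rightarrow> real \<Rightarrow> real \<Rightarrow> real \<Rightarrow> real" where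
  "r22 a b c d e f = a*e + c*f - c^2 - d*e"

lemma idx_sum: "(\<Sum>k\<in>idx. g k) = g 1 + (g 2 :: real)"
  by (simp add: idx_def)

lemma ric11: "ricci_s (GammaA a b c d e f) 1 1 p = r11 a b c d e f"
  unfolding ricci_s_def ricci_def curv_def idx_sum GammaA_def pd_const r11_def
  by (simp add: power2_eq_square field_simps)
lemma ric12: "ricci_s (GammaA a b c d e f) 1 2 p = r12 a b c d e f"
  unfolding ricci_s_def ricci_def curv_def idx_sum GammaA_def pd_const r12_def
  by (simp add: power2_eq_square field_simps)
lemma ric21: "ricci_s (GammaA a b c d e f) 2 1 p = r12 a b c d e f"
  unfolding ricci_s_def ricci_def curv_def idx_sum GammaA_def pd_const r12_def
  by (simp add: power2_eq_square field_simps)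
lemma ric22: "ricci_s (GammaA a b c d e f) 2 2 p = r22 a b c d e f"
  unfolding ricci_s_def ricci_def curv_def idx_sum GammaA_def pd_const r22_def
  by (simp add: power2_eq_square field_simps)

lemma Gval[simp]:
  "GammaA a b c d e f 1 1 1 p = a" "GammaA a b c d e f 1 1 2 p = b"
  "GammaA a b c d e f 1 2 1 p = c" "GammaA a b c d e f 1 2 2 p = d"
  "GammaA a b c d e f 2 1 1 p = c" "GammaA a b c d e f 2 1 2 p = d"
  "GammaA a b c d e f 2 2 1 p = e" "GammaA a b c d e f 2 2 2 p = f"
  by (simp_all add: GammaA_def)

lemma QE_iff:
  "u \<in> QE (GammaA a b c d e f) \<longleftrightarrow> smooth2 u \<and> (\<forall>p.
     pd 1 (pd 1 u) p - (a * pd 1 u p + b * pd 2 u p) + u p * r11 a b c d e f = 0 \<and>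
     pd 1 (pd 2 u) p - (c * pd 1 u p + d * pd 2 u p) + u p * r12 a b c d e f = 0 \<and>
     pd 2 (pd 1 u) p - (c * pd 1 u p + d * pd 2 u p) + u p * r12 a b c d e f = 0 \<and>
     pd 2 (pd 2 u) p - (e * pd 1 u p + f * pd 2 u p) + u p * r22 a b c d e f = 0)"
  unfolding QE_def hess_def
  using ric11[simplified One_nat_def] ric12[simplified One_nat_def] ric21[simplified One_nat_def] ric22
    Gval[simplified One_nat_def]
  by (auto simp: idx_sum ric11 ric12 ric21 ric22 idx_def)

lemma pol_lin: "pol (\<lambda>k. x1 * c1 k + x2 * c2 k + x3 * c3 k + x4 * c4 k) x y
   = x1 * pol c1 x y + x2 * pol c2 x y + x3 * pol c3 x y + x4 * pol c4 x y"
  unfolding pol_def by (simp add: algebra_simps)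

lemma RE_comb_zero:
  assumes "\<forall>k. of_real x1 * c1 k + of_real x2 * c2 k + of_real x3 * c3 k + of_real x4 * c4 k = 0"
  shows "x1 * RE a1 a2 c1 p + x2 * RE a1 a2 c2 p + x3 * RE a1 a2 c3 p + x4 * RE a1 a2 c4 p = 0"
proof -
  have z: "(\<lambda>k. of_real x1 * c1 k + of_real x2 * c2 k + of_real x3 * c3 k + of_real x4 * c4 k) = (\<lambda>k. 0)"
    using assms by auto
  have "pol (\<lambda>k. 0) x y = 0" for x y by (simp add: pol_def)
  then have "EP a1 a2 (\<lambda>k. of_real x1 * c1 k + of_real x2 * c2 k + of_real x3 * c3 k + of_real x4 * c4 k) p = 0"
    unfolding z EP_def by (simp add: case_prod_beta')
  then have "Re (EP a1 a2 (\<lambda>k. of_real x1 * c1 k + of_real x2 * c2 k + of_real x3 * c3 k + of_real x4 * c4 k) p) = 0"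
    by simp
  then show ?thesis unfolding EP_def RE_def pol_lin
    by (simp add: case_prod_beta' algebra_simps)
qed

lemma QE_RE:
  fixes a b c d e f :: real
  assumes C11: "\<forall>k. dXc a1 (dXc a1 q) k - of_real a * dXc a1 q k - of_real b * dYc a2 q k + of_real (r11 a b c d e f) * q k = 0"
    and C12: "\<forall>k. dXc a1 (dYc a2 q) k - of_real c * dXc a1 q k - of_real d * dYc a2 q k + of_real (r12 a b c d e f) * q k = 0"
    and C21: "\<forall>k. dYc a2 (dXc a1 q) k - of_real c * dXc a1 q k - of_real d * dYc a2 q k + of_real (r12 a b c d e f) * q k = 0"
    and C22: "\<forall>k. dYc a2 (dYc a2 q) k - of_real e * dXc a1 q k - of_real f * dYc a2 q k + of_real (r22 a b c d e f) * q k = 0"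
  shows "RE a1 a2 q \<in> QE (GammaA a b c d e f)"
  unfolding QE_iff pd1_RE pd2_RE
proof (intro conjI allI smooth2_RE)
  fix p
  show "RE a1 a2 (dXc a1 (dXc a1 q)) p - (a * RE a1 a2 (dXc a1 q) p + b * RE a1 a2 (dYc a2 q) p) + RE a1 a2 q p * r11 a b c d e f = 0"
    using RE_comb_zero[of 1 "dXc a1 (dXc a1 q)" "-a" "dXc a1 q" "-b" "dYc a2 q" "r11 a b c d e f" q a1 a2 p] C11
    by (simp add: algebra_simps)
  show "RE a1 a2 (dXc a1 (dYc a2 q)) p - (c * RE a1 a2 (dXc a1 q) p + d * RE a1 a2 (dYc a2 q) p) + RE a1 a2 q p * r12 a b c d e f = 0"
    using RE_comb_zero[of 1 "dXc a1 (dYc a2 q)" "-c" "dXc a1 q" "-d" "dYc a2 q" "r12 a b c d e f" q a1 a2 p] C12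
    by (simp add: algebra_simps)
  show "RE a1 a2 (dYc a2 (dXc a1 q)) p - (c * RE a1 a2 (dXc a1 q) p + d * RE a1 a2 (dYc a2 q) p) + RE a1 a2 q p * r12 a b c d e f = 0"
    using RE_comb_zero[of 1 "dYc a2 (dXc a1 q)" "-c" "dXc a1 q" "-d" "dYc a2 q" "r12 a b c d e f" q a1 a2 p] C21
    by (simp add: algebra_simps)
  show "RE a1 a2 (dYc a2 (dYc a2 q)) p - (e * RE a1 a2 (dXc a1 q) p + f * RE a1 a2 (dYc a2 q) p) + RE a1 a2 q p * r22 a b c d e f = 0"
    using RE_comb_zero[of 1 "dYc a2 (dYc a2 q)" "-e" "dXc a1 q" "-f" "dYc a2 q" "r22 a b c d e f" q a1 a2 p] C22
    by (simp add: algebra_simps)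
qed

definition Vc :: "real \<Rightarrow> real \<Rightarrow> real \<Rightarrow> real \<Rightarrow> real \<Rightarrow> real \<Rightarrow> complex \<Rightarrow> complex \<Rightarrow> bool" where
  "Vc a b c d e f z1 z2 \<longleftrightarrow>
     z1^2 = of_real a * z1 + of_real b * z2 - of_real (r11 a b c d e f) \<and>
     z1 * z2 = of_real c * z1 + of_real d * z2 - of_real (r12 a b c d e f) \<and>
     z2^2 = of_real e * z1 + of_real f * z2 - of_real (r22 a b c d e f)"

definition Jc :: "real \<Rightarrow> real \<Rightarrow> real \<Rightarrow> real \<Rightarrow> real \<Rightarrow> real \<Rightarrow> complex \<Rightarrow> complex \<Rightarrow> complex \<Rightarrow> complex \<Rightarrow> bool" where
  "Jc a b c d e f z1 z2 v1 v2 \<longleftrightarrow>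
     (2 * z1 - of_real a) * v1 - of_real b * v2 = 0 \<and>
     (z2 - of_real c) * v1 + (z1 - of_real d) * v2 = 0 \<and>
     - of_real e * v1 + (2 * z2 - of_real f) * v2 = 0"

definition Tc :: "real \<Rightarrow> real \<Rightarrow> real \<Rightarrow> real \<Rightarrow> real \<Rightarrow> real \<Rightarrow> complex \<Rightarrow> complex \<Rightarrow> complex \<Rightarrow> complex \<Rightarrow> complex \<Rightarrow> complex \<Rightarrow> bool" where
  "Tc a b c d e f z1 z2 v1 v2 w1 w2 \<longleftrightarrow>
     (2 * z1 - of_real a) * w1 - of_real b * w2 + 2 * v1^2 = 0 \<and>
     (z2 - of_real c) * w1 + (z1 - of_real d) * w2 + 2 * v1 * v2 = 0 \<and>
     - of_real e * w1 + (2 * z2 - of_real f) * w2 + 2 * v2^2 = 0"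

definition q0 :: "complex \<Rightarrow> nat \<Rightarrow> complex" where
  "q0 s = (\<lambda>k. if k = 0 then s else 0)"
definition q1 :: "complex \<Rightarrow> complex \<Rightarrow> nat \<Rightarrow> complex" where
  "q1 v1 v2 = (\<lambda>k. if k = 1 then v1 else if k = 2 then v2 else 0)"
definition q2 :: "complex \<Rightarrow> complex \<Rightarrow> complex \<Rightarrow> complex \<Rightarrow> nat \<Rightarrow> complex" where
  "q2 v1 v2 w1 w2 = (\<lambda>k. if k = 1 then w1 else if k = 2 then w2 else if k = 3 then v1^2
      else if k = 4 then 2 * v1 * v2 else if k = 5 then v2^2 else 0)"

lemma QE_RE2:
  fixes a b c d e f :: real and z1 z2 :: complex and q :: "nat \<Rightarrow> complex"
  defines "A \<equiv> complex_of_real a" and "B \<equiv> complex_of_real b" and "C \<equiv> complex_of_real c"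
    and "D \<equiv> complex_of_real d" and "E \<equiv> complex_of_real e" and "F \<equiv> complex_of_real f"
  assumes V: "Vc a b c d e f z1 z2"
    and hi: "\<forall>k\<ge>6. q k = 0"
    and A0: "(2*z1 - A) * q 1 - B * q 2 + 2 * q 3 = 0"
    and A1: "2 * (2*z1 - A) * q 3 - B * q 4 = 0"
    and A2: "(2*z1 - A) * q 4 - 2 * B * q 5 = 0"
    and B0: "(z2 - C) * q 1 + (z1 - D) * q 2 + q 4 = 0"
    and B1: "2 * (z2 - C) * q 3 + (z1 - D) * q 4 = 0"
    and B2: "(z2 - C) * q 4 + 2 * (z1 - D) * q 5 = 0"
    and D0: "- E * q 1 + (2*z2 - F) * q 2 + 2 * q 5 = 0"
    and D1: "- 2 * E * q 3 + (2*z2 - F) * q 4 = 0"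
    and D2: "- E * q 4 + 2 * (2*z2 - F) * q 5 = 0"
  shows "RE z1 z2 q \<in> QE (GammaA a b c d e f)"
proof -
  define R1 where "R1 = complex_of_real (r11 a b c d e f)"
  define R2 where "R2 = complex_of_real (r12 a b c d e f)"
  define R3 where "R3 = complex_of_real (r22 a b c d e f)"
  have e1: "z1^2 - A * z1 - B * z2 + R1 = 0" and e2: "z1 * z2 - C * z1 - D * z2 + R2 = 0"
    and e3: "z2^2 - E * z1 - F * z2 + R3 = 0"
    using V unfolding Vc_def A_def B_def C_def D_def E_def F_def R1_def R2_def R3_def by auto
  have k3: "k \<ge> 3 \<Longrightarrow> k = 3 \<or> k = 4 \<or> k = 5 \<or> k \<ge> 6" for k :: nat by auto
  show ?thesis
  proof (rule QE_RE, unfold A_def[symmetric] B_def[symmetric] C_def[symmetric] D_def[symmetric]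
      E_def[symmetric] F_def[symmetric] R1_def[symmetric] R2_def[symmetric] R3_def[symmetric];
      intro allI)
    fix k :: nat
    have "k = 0 \<or> k = 1 \<or> k = 2 \<or> k \<ge> 3" by auto
    moreover
    have "dXc z1 (dXc z1 q) 0 - A * dXc z1 q 0 - B * dYc z2 q 0 + R1 * q 0
      = (z1^2 - A * z1 - B * z2 + R1) * q 0 + ((2*z1 - A) * q 1 - B * q 2 + 2 * q 3)"
      by (simp add: dXc_def dYc_def algebra_simps power2_eq_square)
    moreover
    have "dXc z1 (dXc z1 q) 1 - A * dXc z1 q 1 - B * dYc z2 q 1 + R1 * q 1
      = (z1^2 - A * z1 - B * z2 + R1) * q 1 + (2 * (2*z1 - A) * q 3 - B * q 4)"
      by (simp add: dXc_def dYc_def algebra_simps power2_eq_square)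
    moreover
    have "dXc z1 (dXc z1 q) 2 - A * dXc z1 q 2 - B * dYc z2 q 2 + R1 * q 2
      = (z1^2 - A * z1 - B * z2 + R1) * q 2 + ((2*z1 - A) * q 4 - 2 * B * q 5)"
      by (simp add: dXc_def dYc_def algebra_simps power2_eq_square)
    moreover
    have "k \<ge> 3 \<Longrightarrow> dXc z1 (dXc z1 q) k - A * dXc z1 q k - B * dYc z2 q k + R1 * q k
      = (z1^2 - A * z1 - B * z2 + R1) * q k"
      by (simp add: dXc_def dYc_def algebra_simps power2_eq_square)
    ultimately show "dXc z1 (dXc z1 q) k - A * dXc z1 q k - B * dYc z2 q k + R1 * q k = 0"
      using e1 A0 A1 A2 by auto
  next
    fix k :: nat
    have "k = 0 \<or> k = 1 \<or> k = 2 \<or> k \<ge> 3" by auto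
    moreover
    have "dXc z1 (dYc z2 q) 0 - C * dXc z1 q 0 - D * dYc z2 q 0 + R2 * q 0
      = (z1 * z2 - C * z1 - D * z2 + R2) * q 0 + ((z2 - C) * q 1 + (z1 - D) * q 2 + q 4)"
      by (simp add: dXc_def dYc_def algebra_simps power2_eq_square)
    moreover
    have "dXc z1 (dYc z2 q) 1 - C * dXc z1 q 1 - D * dYc z2 q 1 + R2 * q 1
      = (z1 * z2 - C * z1 - D * z2 + R2) * q 1 + (2 * (z2 - C) * q 3 + (z1 - D) * q 4)"
      by (simp add: dXc_def dYc_def algebra_simps power2_eq_square)
    moreover
    have "dXc z1 (dYc z2 q) 2 - C * dXc z1 q 2 - D * dYc z2 q 2 + R2 * q 2
      = (z1 * z2 - C * z1 - D * z2 + R2) * q 2 + ((z2 - C) * q 4 + 2 * (z1 - D) * q 5)"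
      by (simp add: dXc_def dYc_def algebra_simps power2_eq_square)
    moreover
    have "k \<ge> 3 \<Longrightarrow> dXc z1 (dYc z2 q) k - C * dXc z1 q k - D * dYc z2 q k + R2 * q k
      = (z1 * z2 - C * z1 - D * z2 + R2) * q k"
      by (simp add: dXc_def dYc_def algebra_simps power2_eq_square)
    ultimately show "dXc z1 (dYc z2 q) k - C * dXc z1 q k - D * dYc z2 q k + R2 * q k = 0"
      using e2 B0 B1 B2 by auto
  next
    fix k :: nat
    have "k = 0 \<or> k = 1 \<or> k = 2 \<or> k \<ge> 3" by auto
    moreover
    have "dYc z2 (dXc z1 q) 0 - C * dXc z1 q 0 - D * dYc z2 q 0 + R2 * q 0
      = (z1 * z2 - C * z1 - D * z2 + R2) * q 0 + ((z2 - C) * q 1 + (z1 - D) * q 2 + q 4)"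
      by (simp add: dXc_def dYc_def algebra_simps power2_eq_square)
    moreover
    have "dYc z2 (dXc z1 q) 1 - C * dXc z1 q 1 - D * dYc z2 q 1 + R2 * q 1
      = (z1 * z2 - C * z1 - D * z2 + R2) * q 1 + (2 * (z2 - C) * q 3 + (z1 - D) * q 4)"
      by (simp add: dXc_def dYc_def algebra_simps power2_eq_square)
    moreover
    have "dYc z2 (dXc z1 q) 2 - C * dXc z1 q 2 - D * dYc z2 q 2 + R2 * q 2
      = (z1 * z2 - C * z1 - D * z2 + R2) * q 2 + ((z2 - C) * q 4 + 2 * (z1 - D) * q 5)"
      by (simp add: dXc_def dYc_def algebra_simps power2_eq_square)
    moreover
    have "k \<ge> 3 \<Longrightarrow> dYc z2 (dXc z1 q) k - C * dXc z1 q k - D * dYc z2 q k + R2 * q k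
      = (z1 * z2 - C * z1 - D * z2 + R2) * q k"
      by (simp add: dXc_def dYc_def algebra_simps power2_eq_square)
    ultimately show "dYc z2 (dXc z1 q) k - C * dXc z1 q k - D * dYc z2 q k + R2 * q k = 0"
      using e2 B0 B1 B2 by auto
  next
    fix k :: nat
    have "k = 0 \<or> k = 1 \<or> k = 2 \<or> k \<ge> 3" by auto
    moreover
    have "dYc z2 (dYc z2 q) 0 - E * dXc z1 q 0 - F * dYc z2 q 0 + R3 * q 0
      = (z2^2 - E * z1 - F * z2 + R3) * q 0 + (- E * q 1 + (2*z2 - F) * q 2 + 2 * q 5)"
      by (simp add: dXc_def dYc_def algebra_simps power2_eq_square)
    moreover
    have "dYc z2 (dYc z2 q) 1 - E * dXc z1 q 1 - F * dYc z2 q 1 + R3 * q 1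
      = (z2^2 - E * z1 - F * z2 + R3) * q 1 + (- 2 * E * q 3 + (2*z2 - F) * q 4)"
      by (simp add: dXc_def dYc_def algebra_simps power2_eq_square)
    moreover
    have "dYc z2 (dYc z2 q) 2 - E * dXc z1 q 2 - F * dYc z2 q 2 + R3 * q 2
      = (z2^2 - E * z1 - F * z2 + R3) * q 2 + (- E * q 4 + 2 * (2*z2 - F) * q 5)"
      by (simp add: dXc_def dYc_def algebra_simps power2_eq_square)
    moreover
    have "k \<ge> 3 \<Longrightarrow> dYc z2 (dYc z2 q) k - E * dXc z1 q k - F * dYc z2 q k + R3 * q k
      = (z2^2 - E * z1 - F * z2 + R3) * q k"
      by (simp add: dXc_def dYc_def algebra_simps power2_eq_square)
    ultimately show "dYc z2 (dYc z2 q) k - E * dXc z1 q k - F * dYc z2 q k + R3 * q k = 0"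
      using e3 D0 D1 D2 by auto
  qed
qed

lemma T0:
  assumes "Vc a b c d e f z1 z2"
  shows "RE z1 z2 (q0 s) \<in> QE (GammaA a b c d e f)"
  by (rule QE_RE2[OF assms]) (auto simp: q0_def)

lemma T1:
  assumes "Vc a b c d e f z1 z2" "Jc a b c d e f z1 z2 v1 v2"
  shows "RE z1 z2 (q1 v1 v2) \<in> QE (GammaA a b c d e f)"
  using assms(2) unfolding Jc_def
  by (intro QE_RE2[OF assms(1)]) (auto simp: q1_def algebra_simps)

lemma T2:
  assumes "Vc a b c d e f z1 z2" "Jc a b c d e f z1 z2 v1 v2" "Tc a b c d e f z1 z2 v1 v2 w1 w2"
  shows "RE z1 z2 (q2 v1 v2 w1 w2) \<in> QE (GammaA a b c d e f)"
proof -
  have J: "(2 * z1 - of_real a) * v1 - of_real b * v2 = 0"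
     "(z2 - of_real c) * v1 + (z1 - of_real d) * v2 = 0"
     "- of_real e * v1 + (2 * z2 - of_real f) * v2 = 0"
    using assms(2) unfolding Jc_def by auto
  have T: "(2 * z1 - of_real a) * w1 - of_real b * w2 + 2 * v1^2 = 0"
     "(z2 - of_real c) * w1 + (z1 - of_real d) * w2 + 2 * v1 * v2 = 0"
     "- of_real e * w1 + (2 * z2 - of_real f) * w2 + 2 * v2^2 = 0"
    using assms(3) unfolding Tc_def by auto
  have m: "\<And>x y. x = 0 \<Longrightarrow> y * x = (0::complex)" by simp
  show ?thesis
    apply (rule QE_RE2[OF assms(1)])
    apply (simp add: q2_def)
    subgoal using T(1) by (simp add: q2_def)
    subgoal using m[OF J(1), of "2 * v1"] by (simp add: q2_def algebra_simps power2_eq_square)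
    subgoal using m[OF J(1), of "2 * v2"] by (simp add: q2_def algebra_simps power2_eq_square)
    subgoal using T(2) by (simp add: q2_def)
    subgoal using m[OF J(2), of "2 * v1"] by (simp add: q2_def algebra_simps power2_eq_square)
    subgoal using m[OF J(2), of "2 * v2"] by (simp add: q2_def algebra_simps power2_eq_square)
    subgoal using T(3) by (simp add: q2_def)
    subgoal using m[OF J(3), of "2 * v1"] by (simp add: q2_def algebra_simps power2_eq_square)
    subgoal using m[OF J(3), of "2 * v2"] by (simp add: q2_def algebra_simps power2_eq_square)
    done
qed

lemma sq_bound: "(\<bar>p\<bar> + \<bar>q\<bar> + \<bar>r\<bar>)^2 \<le> 3 * (p^2 + q^2 + (r::real)^2)"
proof -
  have "0 \<le> (\<bar>p\<bar> - \<bar>q\<bar>)^2 + (\<bar>q\<bar> - \<bar>r\<bar>)^2 + (\<bar>p\<bar> - \<bar>r\<bar>)^2" by simp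
  then show ?thesis by (simp add: power2_eq_square algebra_simps abs_mult_self_eq)
qed

lemma ode3_zero:
  fixes p q r p' q' r' :: "real \<Rightarrow> real"
  assumes dp: "\<And>t. (p has_real_derivative p' t) (at t)"
    and dq: "\<And>t. (q has_real_derivative q' t) (at t)"
    and dr: "\<And>t. (r has_real_derivative r' t) (at t)"
    and K: "K \<ge> 0"
    and bd: "\<And>t. \<bar>p' t\<bar> + \<bar>q' t\<bar> + \<bar>r' t\<bar> \<le> K * (\<bar>p t\<bar> + \<bar>q t\<bar> + \<bar>r t\<bar>)"
    and z: "p 0 = 0" "q 0 = 0" "r 0 = 0"
  shows "p t = 0 \<and> q t = 0 \<and> r t = 0"
proof -
  define E where "E t = (p t)^2 + (q t)^2 + (r t)^2" for t
  define E' where "E' t = 2 * (p t * p' t + q t * q' t + r t * r' t)" for t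
  define M where "M = 6 * K"
  have dE: "(E has_real_derivative E' t) (at t)" for t
    unfolding E_def[abs_def] E'_def
    by (rule derivative_eq_intros dp dq dr refl)+ (simp add: algebra_simps)
  have Eb: "\<bar>E' t\<bar> \<le> M * E t" for t
  proof -
    have "\<bar>E' t\<bar> \<le> 2 * (\<bar>p t\<bar> * \<bar>p' t\<bar> + \<bar>q t\<bar> * \<bar>q' t\<bar> + \<bar>r t\<bar> * \<bar>r' t\<bar>)"
      unfolding E'_def by (simp add: abs_mult[symmetric] abs_triangle_ineq order_trans[OF abs_triangle_ineq]
          add_mono)
    also have "\<dots> \<le> 2 * ((\<bar>p t\<bar> + \<bar>q t\<bar> + \<bar>r t\<bar>) * (\<bar>p' t\<bar> + \<bar>q' t\<bar> + \<bar>r' t\<bar>))"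
      by (simp add: algebra_simps)
    also have "\<dots> \<le> 2 * ((\<bar>p t\<bar> + \<bar>q t\<bar> + \<bar>r t\<bar>) * (K * (\<bar>p t\<bar> + \<bar>q t\<bar> + \<bar>r t\<bar>)))"
      by (intro mult_left_mono bd) auto
    also have "\<dots> = 2 * K * (\<bar>p t\<bar> + \<bar>q t\<bar> + \<bar>r t\<bar>)^2" by (simp add: power2_eq_square)
    also have "\<dots> \<le> 2 * K * (3 * E t)"
      unfolding E_def using K sq_bound by (intro mult_left_mono) auto
    finally show ?thesis by (simp add: M_def)
  qed
  have E0: "E 0 = 0" by (simp add: E_def z)
  have Epos: "E t \<ge> 0" for t by (simp add: E_def)
  show ?thesis
  proof (cases "t \<ge> 0")
    case True
    define g where "g t = E t * exp (- M * t)" for t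
    have "g t \<le> g 0"
    proof (rule DERIV_nonpos_imp_nonincreasing[OF True])
      fix x
      have "(g has_real_derivative (E' x * exp (- M * x) + E x * (exp (- M * x) * (- M)))) (at x)"
        unfolding g_def[abs_def] by (rule derivative_eq_intros dE refl)+ simp
      moreover have "E' x * exp (- M * x) + E x * (exp (- M * x) * (- M)) = (E' x - M * E x) * exp (- M * x)"
        by (simp add: algebra_simps)
      moreover have "E' x - M * E x \<le> 0" using Eb[of x] by linarith
      ultimately show "\<exists>y. (g has_real_derivative y) (at x) \<and> y \<le> 0"
        by (metis mult_nonpos_nonneg exp_ge_zero)
    qed
    then have "E t * exp (- M * t) \<le> 0" by (simp add: g_def E0)
    then have "E t \<le> 0" by (simp add: mult_le_0_iff)
    then have "E t = 0" using Epos[of t] by linarith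
    then show ?thesis unfolding E_def by (simp add: add_nonneg_eq_0_iff)
  next
    case False
    then have tl: "t \<le> 0" by simp
    define g where "g t = E t * exp (M * t)" for t
    have "g t \<le> g 0"
    proof (rule DERIV_nonneg_imp_nondecreasing[OF tl])
      fix x
      have "(g has_real_derivative (E' x * exp (M * x) + E x * (exp (M * x) * M))) (at x)"
        unfolding g_def[abs_def] by (rule derivative_eq_intros dE refl)+ simp
      moreover have "E' x * exp (M * x) + E x * (exp (M * x) * M) = (E' x + M * E x) * exp (M * x)"
        by (simp add: algebra_simps)
      moreover have "E' x + M * E x \<ge> 0" using Eb[of x] by linarith
      ultimately show "\<exists>y. (g has_real_derivative y) (at x) \<and> y \<ge> 0"
        by (metis zero_le_mult_iff exp_ge_zero)
    qed
    then have "E t * exp (M * t) \<le> 0" by (simp add: g_def E0)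
    then have "E t \<le> 0" by (simp add: mult_le_0_iff)
    then have "E t = 0" using Epos[of t] by linarith
    then show ?thesis unfolding E_def by (simp add: add_nonneg_eq_0_iff)
  qed
qed

definition SOL :: "real \<Rightarrow> real \<Rightarrow> real \<Rightarrow> real \<Rightarrow> real \<Rightarrow> real \<Rightarrow> (real\<times>real\<Rightarrow>real) \<Rightarrow> (real\<times>real\<Rightarrow>real) \<Rightarrow> (real\<times>real\<Rightarrow>real) \<Rightarrow> bool" where
  "SOL a b c d e f w wx wy \<longleftrightarrow> (\<forall>x y.
     ((\<lambda>t. w (t,y)) has_real_derivative wx (x,y)) (at x) \<and>
     ((\<lambda>t. wx (t,y)) has_real_derivative (a * wx (x,y) + b * wy (x,y) - r11 a b c d e f * w (x,y))) (at x) \<and>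
     ((\<lambda>t. wy (t,y)) has_real_derivative (c * wx (x,y) + d * wy (x,y) - r12 a b c d e f * w (x,y))) (at x) \<and>
     ((\<lambda>t. w (x,t)) has_real_derivative wy (x,y)) (at y) \<and>
     ((\<lambda>t. wx (x,t)) has_real_derivative (c * wx (x,y) + d * wy (x,y) - r12 a b c d e f * w (x,y))) (at y) \<and>
     ((\<lambda>t. wy (x,t)) has_real_derivative (e * wx (x,y) + f * wy (x,y) - r22 a b c d e f * w (x,y))) (at y))"

lemma bound3:
  fixes p q r k1 k2 k3 :: real
  shows "\<bar>k1 * p + k2 * q + k3 * r\<bar> \<le> (\<bar>k1\<bar> + \<bar>k2\<bar> + \<bar>k3\<bar>) * (\<bar>p\<bar> + \<bar>q\<bar> + \<bar>r\<bar>)"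
proof -
  let ?S = "\<bar>p\<bar> + \<bar>q\<bar> + \<bar>r\<bar>"
  have "\<bar>k1 * p + k2 * q + k3 * r\<bar> \<le> \<bar>k1\<bar> * \<bar>p\<bar> + \<bar>k2\<bar> * \<bar>q\<bar> + \<bar>k3\<bar> * \<bar>r\<bar>"
    using abs_triangle_ineq[of "k1 * p + k2 * q" "k3 * r"] abs_triangle_ineq[of "k1 * p" "k2 * q"]
    by (simp add: abs_mult)
  moreover have "\<bar>k1\<bar> * \<bar>p\<bar> \<le> \<bar>k1\<bar> * ?S" "\<bar>k2\<bar> * \<bar>q\<bar> \<le> \<bar>k2\<bar> * ?S" "\<bar>k3\<bar> * \<bar>r\<bar> \<le> \<bar>k3\<bar> * ?S"
    by (auto intro!: mult_left_mono)
  moreover have "(\<bar>k1\<bar> + \<bar>k2\<bar> + \<bar>k3\<bar>) * ?S = \<bar>k1\<bar> * ?S + \<bar>k2\<bar> * ?S + \<bar>k3\<bar> * ?S"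
    by (simp add: algebra_simps)
  ultimately show ?thesis by linarith
qed

lemma SOL_zero:
  assumes S: "SOL a b c d e f w wx wy"
    and z: "w (0,0) = 0" "wx (0,0) = 0" "wy (0,0) = 0"
  shows "w (x,y) = 0"
proof -
  define K where "K = 1 + \<bar>a\<bar> + \<bar>b\<bar> + \<bar>c\<bar> + \<bar>d\<bar> + \<bar>e\<bar> + \<bar>f\<bar> + \<bar>r11 a b c d e f\<bar>
     + \<bar>r12 a b c d e f\<bar> + \<bar>r22 a b c d e f\<bar>"
  have K0: "K \<ge> 0" unfolding K_def by simp
  have h: "\<And>x y. ((\<lambda>t. w (t,y)) has_real_derivative wx (x,y)) (at x) \<and>
     ((\<lambda>t. wx (t,y)) has_real_derivative (a * wx (x,y) + b * wy (x,y) - r11 a b c d e f * w (x,y))) (at x) \<and>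
     ((\<lambda>t. wy (t,y)) has_real_derivative (c * wx (x,y) + d * wy (x,y) - r12 a b c d e f * w (x,y))) (at x) \<and>
     ((\<lambda>t. w (x,t)) has_real_derivative wy (x,y)) (at y) \<and>
     ((\<lambda>t. wx (x,t)) has_real_derivative (c * wx (x,y) + d * wy (x,y) - r12 a b c d e f * w (x,y))) (at y) \<and>
     ((\<lambda>t. wy (x,t)) has_real_derivative (e * wx (x,y) + f * wy (x,y) - r22 a b c d e f * w (x,y))) (at y)"
    using S unfolding SOL_def by blast
  have bd: "\<bar>Q\<bar> + \<bar>k1 * Q + k2 * R - k3 * P\<bar> + \<bar>k4 * Q + k5 * R - k6 * P\<bar> \<le> K * (\<bar>P\<bar> + \<bar>Q\<bar> + \<bar>R\<bar>)"
    if "\<bar>k1\<bar> + \<bar>k2\<bar> + \<bar>k3\<bar> + \<bar>k4\<bar> + \<bar>k5\<bar> + \<bar>k6\<bar> \<le> K - 1" for P Q R k1 k2 k3 k4 k5 k6 :: real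
  proof -
    have "\<bar>k1 * Q + k2 * R - k3 * P\<bar> \<le> (\<bar>-k3\<bar> + \<bar>k1\<bar> + \<bar>k2\<bar>) * (\<bar>P\<bar> + \<bar>Q\<bar> + \<bar>R\<bar>)"
      using bound3[of "-k3" P k1 Q k2 R] by (simp add: algebra_simps)
    moreover have "\<bar>k4 * Q + k5 * R - k6 * P\<bar> \<le> (\<bar>-k6\<bar> + \<bar>k4\<bar> + \<bar>k5\<bar>) * (\<bar>P\<bar> + \<bar>Q\<bar> + \<bar>R\<bar>)"
      using bound3[of "-k6" P k4 Q k5 R] by (simp add: algebra_simps)
    moreover have "(\<bar>-k3\<bar> + \<bar>k1\<bar> + \<bar>k2\<bar>) * (\<bar>P\<bar> + \<bar>Q\<bar> + \<bar>R\<bar>) + (\<bar>-k6\<bar> + \<bar>k4\<bar> + \<bar>k5\<bar>) * (\<bar>P\<bar> + \<bar>Q\<bar> + \<bar>R\<bar>)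
        \<le> (K - 1) * (\<bar>P\<bar> + \<bar>Q\<bar> + \<bar>R\<bar>)"
      using that by (simp add: distrib_right[symmetric] mult_right_mono)
    moreover have "(K - 1) * (\<bar>P\<bar> + \<bar>Q\<bar> + \<bar>R\<bar>) = K * (\<bar>P\<bar> + \<bar>Q\<bar> + \<bar>R\<bar>) - (\<bar>P\<bar> + \<bar>Q\<bar> + \<bar>R\<bar>)"
      by (simp add: algebra_simps)
    ultimately show ?thesis using abs_ge_zero[of P] abs_ge_zero[of R] by linarith
  qed
  have bd1: "\<bar>wx (t,y)\<bar> + \<bar>a * wx (t,y) + b * wy (t,y) - r11 a b c d e f * w (t,y)\<bar>
      + \<bar>c * wx (t,y) + d * wy (t,y) - r12 a b c d e f * w (t,y)\<bar>
      \<le> K * (\<bar>w (t,y)\<bar> + \<bar>wx (t,y)\<bar> + \<bar>wy (t,y)\<bar>)" for t y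
    by (rule bd) (simp add: K_def)
  have bd2: "\<bar>wy (x,t)\<bar> + \<bar>c * wx (x,t) + d * wy (x,t) - r12 a b c d e f * w (x,t)\<bar>
      + \<bar>e * wx (x,t) + f * wy (x,t) - r22 a b c d e f * w (x,t)\<bar>
      \<le> K * (\<bar>w (x,t)\<bar> + \<bar>wx (x,t)\<bar> + \<bar>wy (x,t)\<bar>)" for t x
  proof -
    have "\<bar>wy (x,t)\<bar> + \<bar>c * wx (x,t) + d * wy (x,t) - r12 a b c d e f * w (x,t)\<bar>
      + \<bar>e * wx (x,t) + f * wy (x,t) - r22 a b c d e f * w (x,t)\<bar>
      \<le> K * (\<bar>w (x,t)\<bar> + \<bar>wy (x,t)\<bar> + \<bar>wx (x,t)\<bar>)"
      using bd[of d c "r12 a b c d e f" f e "r22 a b c d e f" "wy (x,t)" "wx (x,t)" "w (x,t)"]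
      by (simp add: K_def algebra_simps)
    then show ?thesis by (simp add: algebra_simps)
  qed
  have line0: "w (t,0) = 0 \<and> wx (t,0) = 0 \<and> wy (t,0) = 0" for t
    using ode3_zero[where p="\<lambda>t. w (t,0)" and q="\<lambda>t. wx (t,0)" and r="\<lambda>t. wy (t,0)"
      and p'="\<lambda>t. wx (t,0)" and q'="\<lambda>t. a * wx (t,0) + b * wy (t,0) - r11 a b c d e f * w (t,0)"
      and r'="\<lambda>t. c * wx (t,0) + d * wy (t,0) - r12 a b c d e f * w (t,0)", OF _ _ _ K0 bd1]
      h z by blast
  show ?thesis
    using ode3_zero[where p="\<lambda>t. w (x,t)" and q="\<lambda>t. wy (x,t)" and r="\<lambda>t. wx (x,t)"
      and p'="\<lambda>t. wy (x,t)" and q'="\<lambda>t. e * wx (x,t) + f * wy (x,t) - r22 a b c d e f * w (x,t)"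
      and r'="\<lambda>t. c * wx (x,t) + d * wy (x,t) - r12 a b c d e f * w (x,t)", OF _ _ _ K0]
      h line0 bd2 by (simp add: algebra_simps)
qed

lemma diff_form:
  fixes u :: "real \<times> real \<Rightarrow> real"
  assumes "u differentiable (at (x,y))"
  shows "\<exists>A B. (u has_derivative (\<lambda>(h,k). h * A + k * B)) (at (x,y))"
proof -
  obtain D where D: "(u has_derivative D) (at (x,y))" using assms by (auto simp: differentiable_def)
  then have lin: "linear D" using has_derivative_linear by blast
  define A where "A = D (1,0)"
  define B where "B = D (0,1)"
  have dhk: "D (h,k) = h * A + k * B" for h k
  proof -
    have "(h,k) = h *\<^sub>R (1,0) + k *\<^sub>R (0,1)" by simp
    then have "D (h,k) = D (h *\<^sub>R (1,0) + k *\<^sub>R (0,1))" by (rule arg_cong)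
    also have "\<dots> = D (h *\<^sub>R (1,0)) + D (k *\<^sub>R (0,1))" by (rule linear_add[OF lin])
    also have "\<dots> = h *\<^sub>R D (1,0) + k *\<^sub>R D (0,1)" by (simp only: linear_scale[OF lin])
    also have "\<dots> = h * A + k * B" by (simp add: A_def B_def)
    finally show ?thesis .
  qed
  have "D = (\<lambda>(h,k). h * A + k * B)"
    by (rule ext) (auto simp: dhk split: prod.splits)
  then have "(u has_derivative (\<lambda>(h,k). h * A + k * B)) (at (x,y))" using D by simp
  then show ?thesis by blast
qed

lemma diff_line1:
  assumes "u differentiable (at (x,y))"
  shows "((\<lambda>t. u (t,y)) has_real_derivative pd 1 u (x,y)) (at x)"
proof -
  obtain A B where "(u has_derivative (\<lambda>(h,k). h * A + k * B)) (at (x,y))" using diff_form[OF assms] by blast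
  then have d: "((\<lambda>t. u (t,y)) has_real_derivative A) (at x)" by (rule line1)
  then have "pd 1 u (x,y) = A" unfolding pd_def by (simp add: DERIV_imp_deriv)
  then show ?thesis using d by simp
qed

lemma diff_line2:
  assumes "u differentiable (at (x,y))"
  shows "((\<lambda>t. u (x,t)) has_real_derivative pd 2 u (x,y)) (at y)"
proof -
  obtain A B where "(u has_derivative (\<lambda>(h,k). h * A + k * B)) (at (x,y))" using diff_form[OF assms] by blast
  then have d: "((\<lambda>t. u (x,t)) has_real_derivative B) (at y)" by (rule line2)
  then have "pd 2 u (x,y) = B" unfolding pd_def by (simp add: DERIV_imp_deriv)
  then show ?thesis using d by simp
qed

lemma smooth2_D:
  assumes "smooth2 u"
  shows "\<forall>p. u differentiable (at p)" "smooth2 (pd 1 u)" "smooth2 (pd 2 u)"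
  using assms by (auto elim: smooth2.cases)

lemma QE_SOL:
  assumes "u \<in> QE (GammaA a b c d e f)"
  shows "SOL a b c d e f u (pd 1 u) (pd 2 u)"
proof -
  have sm: "smooth2 u" and eq: "\<And>p. pd 1 (pd 1 u) p - (a * pd 1 u p + b * pd 2 u p) + u p * r11 a b c d e f = 0 \<and>
     pd 1 (pd 2 u) p - (c * pd 1 u p + d * pd 2 u p) + u p * r12 a b c d e f = 0 \<and>
     pd 2 (pd 1 u) p - (c * pd 1 u p + d * pd 2 u p) + u p * r12 a b c d e f = 0 \<and>
     pd 2 (pd 2 u) p - (e * pd 1 u p + f * pd 2 u p) + u p * r22 a b c d e f = 0"
    using assms unfolding QE_iff by auto
  have d0: "\<forall>p. u differentiable (at p)" and d1: "\<forall>p. pd 1 u differentiable (at p)"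
    and d2: "\<forall>p. pd 2 u differentiable (at p)"
    using smooth2_D[OF sm] smooth2_D[OF smooth2_D(2)[OF sm]] smooth2_D[OF smooth2_D(3)[OF sm]] by auto
  show ?thesis unfolding SOL_def
  proof (intro allI conjI)
    fix x y
    show "((\<lambda>t. u (t,y)) has_real_derivative pd 1 u (x,y)) (at x)" using d0 diff_line1 by blast
    show "((\<lambda>t. u (x,t)) has_real_derivative pd 2 u (x,y)) (at y)" using d0 diff_line2 by blast
    have "((\<lambda>t. pd 1 u (t,y)) has_real_derivative pd 1 (pd 1 u) (x,y)) (at x)" using d1 diff_line1 by blast
    moreover have "pd 1 (pd 1 u) (x,y) = a * pd 1 u (x, y) + b * pd 2 u (x, y) - r11 a b c d e f * u (x, y)"
      using eq[of "(x,y)"] by (simp add: algebra_simps)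
    ultimately show "((\<lambda>t. pd 1 u (t,y)) has_real_derivative a * pd 1 u (x, y) + b * pd 2 u (x, y) - r11 a b c d e f * u (x, y)) (at x)" by simp
    have "((\<lambda>t. pd 2 u (t,y)) has_real_derivative pd 1 (pd 2 u) (x,y)) (at x)" using d2 diff_line1 by blast
    moreover have "pd 1 (pd 2 u) (x,y) = c * pd 1 u (x, y) + d * pd 2 u (x, y) - r12 a b c d e f * u (x, y)"
      using eq[of "(x,y)"] by (simp add: algebra_simps)
    ultimately show "((\<lambda>t. pd 2 u (t,y)) has_real_derivative c * pd 1 u (x, y) + d * pd 2 u (x, y) - r12 a b c d e f * u (x, y)) (at x)" by simp
    have "((\<lambda>t. pd 1 u (x,t)) has_real_derivative pd 2 (pd 1 u) (x,y)) (at y)" using d1 diff_line2 by blast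
    moreover have "pd 2 (pd 1 u) (x,y) = c * pd 1 u (x, y) + d * pd 2 u (x, y) - r12 a b c d e f * u (x, y)"
      using eq[of "(x,y)"] by (simp add: algebra_simps)
    ultimately show "((\<lambda>t. pd 1 u (x,t)) has_real_derivative c * pd 1 u (x, y) + d * pd 2 u (x, y) - r12 a b c d e f * u (x, y)) (at y)" by simp
    have "((\<lambda>t. pd 2 u (x,t)) has_real_derivative pd 2 (pd 2 u) (x,y)) (at y)" using d2 diff_line2 by blast
    moreover have "pd 2 (pd 2 u) (x,y) = e * pd 1 u (x, y) + f * pd 2 u (x, y) - r22 a b c d e f * u (x, y)"
      using eq[of "(x,y)"] by (simp add: algebra_simps)
    ultimately show "((\<lambda>t. pd 2 u (x,t)) has_real_derivative e * pd 1 u (x, y) + f * pd 2 u (x, y) - r22 a b c d e f * u (x, y)) (at y)" by simp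
  qed
qed

lemma comb1:
  assumes "((\<lambda>t. u1 (t,y)) has_real_derivative A) (at x)" "((\<lambda>t. u2 (t,y)) has_real_derivative B) (at x)"
    "V = k1 * A + k2 * B"
  shows "((\<lambda>t. k1 * u1 (t,y) + k2 * u2 (t,y)) has_real_derivative V) (at x)"
  using DERIV_add[OF DERIV_cmult[OF assms(1)] DERIV_cmult[OF assms(2)]] assms(3) by simp

lemma comb2:
  assumes "((\<lambda>t. u1 (x,t)) has_real_derivative A) (at y)" "((\<lambda>t. u2 (x,t)) has_real_derivative B) (at y)"
    "V = k1 * A + k2 * B"
  shows "((\<lambda>t. k1 * u1 (x,t) + k2 * u2 (x,t)) has_real_derivative V) (at y)"
  using DERIV_add[OF DERIV_cmult[OF assms(1)] DERIV_cmult[OF assms(2)]] assms(3) by simp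

lemma SOL_lin:
  assumes "SOL a b c d e f w1 wx1 wy1" "SOL a b c d e f w2 wx2 wy2"
  shows "SOL a b c d e f (\<lambda>p. k1 * w1 p + k2 * w2 p) (\<lambda>p. k1 * wx1 p + k2 * wx2 p) (\<lambda>p. k1 * wy1 p + k2 * wy2 p)"
  unfolding SOL_def
proof (intro allI)
  fix x y
  note h1 = assms(1)[unfolded SOL_def, rule_format, where x=x and y=y]
  note h2 = assms(2)[unfolded SOL_def, rule_format, where x=x and y=y]
  show "((\<lambda>t. k1 * w1 (t, y) + k2 * w2 (t, y)) has_real_derivative k1 * wx1 (x, y) + k2 * wx2 (x, y)) (at x) \<and>
    ((\<lambda>t. k1 * wx1 (t, y) + k2 * wx2 (t, y)) has_real_derivative
     a * (k1 * wx1 (x, y) + k2 * wx2 (x, y)) + b * (k1 * wy1 (x, y) + k2 * wy2 (x, y)) -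
     r11 a b c d e f * (k1 * w1 (x, y) + k2 * w2 (x, y))) (at x) \<and>
    ((\<lambda>t. k1 * wy1 (t, y) + k2 * wy2 (t, y)) has_real_derivative
     c * (k1 * wx1 (x, y) + k2 * wx2 (x, y)) + d * (k1 * wy1 (x, y) + k2 * wy2 (x, y)) -
     r12 a b c d e f * (k1 * w1 (x, y) + k2 * w2 (x, y))) (at x) \<and>
    ((\<lambda>t. k1 * w1 (x, t) + k2 * w2 (x, t)) has_real_derivative k1 * wy1 (x, y) + k2 * wy2 (x, y)) (at y) \<and>
    ((\<lambda>t. k1 * wx1 (x, t) + k2 * wx2 (x, t)) has_real_derivative
     c * (k1 * wx1 (x, y) + k2 * wx2 (x, y)) + d * (k1 * wy1 (x, y) + k2 * wy2 (x, y)) -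
     r12 a b c d e f * (k1 * w1 (x, y) + k2 * w2 (x, y))) (at y) \<and>
    ((\<lambda>t. k1 * wy1 (x, t) + k2 * wy2 (x, t)) has_real_derivative
     e * (k1 * wx1 (x, y) + k2 * wx2 (x, y)) + f * (k1 * wy1 (x, y) + k2 * wy2 (x, y)) -
     r22 a b c d e f * (k1 * w1 (x, y) + k2 * w2 (x, y))) (at y)"
    using h1 h2
    apply (elim conjE)
    apply (intro conjI)
    apply (rule comb1, assumption, assumption, simp add: algebra_simps)
    apply (rule comb1, assumption, assumption, simp add: algebra_simps)
    apply (rule comb1, assumption, assumption, simp add: algebra_simps)
    apply (rule comb2, assumption, assumption, simp add: algebra_simps)
    apply (rule comb2, assumption, assumption, simp add: algebra_simps)
    apply (rule comb2, assumption, assumption, simp add: algebra_simps)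
    done
qed

definition det3 :: "real \<Rightarrow> real \<Rightarrow> real \<Rightarrow> real \<Rightarrow> real \<Rightarrow> real \<Rightarrow> real \<Rightarrow> real \<Rightarrow> real \<Rightarrow> real" where
  "det3 A1 B1 C1 A2 B2 C2 A3 B3 C3 = A1*(B2*C3 - B3*C2) - B1*(A2*C3 - A3*C2) + C1*(A2*B3 - A3*B2)"

lemma det3_12: "det3 A1 B1 C1 A1 B1 C1 A3 B3 C3 = 0" by (simp add: det3_def algebra_simps)
lemma det3_13: "det3 A1 B1 C1 A2 B2 C2 A1 B1 C1 = 0" by (simp add: det3_def algebra_simps)
lemma det3_23: "det3 A1 B1 C1 A2 B2 C2 A2 B2 C2 = 0" by (simp add: det3_def algebra_simps)

lemma indep3:
  assumes "det3 A1 B1 C1 A2 B2 C2 A3 B3 C3 \<noteq> 0"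
    and "c1*A1 + c2*A2 + c3*A3 = 0" "c1*B1 + c2*B2 + c3*B3 = 0" "c1*C1 + c2*C2 + c3*C3 = 0"
  shows "c1 = 0 \<and> c2 = 0 \<and> c3 = 0"
proof -
  let ?d = "det3 A1 B1 C1 A2 B2 C2 A3 B3 C3"
  have "c1 * ?d = (B2*C3-B3*C2)*(c1*A1 + c2*A2 + c3*A3) - (A2*C3 - A3*C2)*(c1*B1 + c2*B2 + c3*B3)
     + (A2*B3 - A3*B2)*(c1*C1 + c2*C2 + c3*C3)"
    unfolding det3_def by (simp add: algebra_simps)
  moreover have "c2 * ?d = -(B1*C3-B3*C1)*(c1*A1 + c2*A2 + c3*A3) + (A1*C3 - A3*C1)*(c1*B1 + c2*B2 + c3*B3)
     - (A1*B3 - A3*B1)*(c1*C1 + c2*C2 + c3*C3)"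
    unfolding det3_def by (simp add: algebra_simps)
  moreover have "c3 * ?d = (B1*C2-B2*C1)*(c1*A1 + c2*A2 + c3*A3) - (A1*C2 - A2*C1)*(c1*B1 + c2*B2 + c3*B3)
     + (A1*B2 - A2*B1)*(c1*C1 + c2*C2 + c3*C3)"
    unfolding det3_def by (simp add: algebra_simps)
  ultimately show ?thesis using assms by auto
qed

lemma cramer3:
  assumes "det3 A1 B1 C1 A2 B2 C2 A3 B3 C3 \<noteq> 0"
  shows "\<exists>k1 k2 k3. k1*A1 + k2*A2 + k3*A3 = t1 \<and> k1*B1 + k2*B2 + k3*B3 = t2 \<and> k1*C1 + k2*C2 + k3*C3 = t3"
proof -
  let ?d = "det3 A1 B1 C1 A2 B2 C2 A3 B3 C3"
  define k1 where "k1 = ((B2*C3-B3*C2)*t1 - (A2*C3 - A3*C2)*t2 + (A2*B3 - A3*B2)*t3) / ?d"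
  define k2 where "k2 = (-(B1*C3-B3*C1)*t1 + (A1*C3 - A3*C1)*t2 - (A1*B3 - A3*B1)*t3) / ?d"
  define k3 where "k3 = ((B1*C2-B2*C1)*t1 - (A1*C2 - A2*C1)*t2 + (A1*B2 - A2*B1)*t3) / ?d"
  have e1: "((B2*C3-B3*C2)*t1 - (A2*C3 - A3*C2)*t2 + (A2*B3 - A3*B2)*t3) * A1
     + (-(B1*C3-B3*C1)*t1 + (A1*C3 - A3*C1)*t2 - (A1*B3 - A3*B1)*t3) * A2
     + ((B1*C2-B2*C1)*t1 - (A1*C2 - A2*C1)*t2 + (A1*B2 - A2*B1)*t3) * A3 = t1 * ?d"
    by (simp add: det3_def algebra_simps)
  have e2: "((B2*C3-B3*C2)*t1 - (A2*C3 - A3*C2)*t2 + (A2*B3 - A3*B2)*t3) * B1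
     + (-(B1*C3-B3*C1)*t1 + (A1*C3 - A3*C1)*t2 - (A1*B3 - A3*B1)*t3) * B2
     + ((B1*C2-B2*C1)*t1 - (A1*C2 - A2*C1)*t2 + (A1*B2 - A2*B1)*t3) * B3 = t2 * ?d"
    by (simp add: det3_def algebra_simps)
  have e3: "((B2*C3-B3*C2)*t1 - (A2*C3 - A3*C2)*t2 + (A2*B3 - A3*B2)*t3) * C1
     + (-(B1*C3-B3*C1)*t1 + (A1*C3 - A3*C1)*t2 - (A1*B3 - A3*B1)*t3) * C2
     + ((B1*C2-B2*C1)*t1 - (A1*C2 - A2*C1)*t2 + (A1*B2 - A2*B1)*t3) * C3 = t3 * ?d"
    by (simp add: det3_def algebra_simps)
  have "k1*A1 + k2*A2 + k3*A3 = t1"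
    unfolding k1_def k2_def k3_def using assms e1 by (simp add: times_divide_eq_left add_divide_distrib[symmetric] diff_divide_distrib[symmetric])
  moreover have "k1*B1 + k2*B2 + k3*B3 = t2"
    unfolding k1_def k2_def k3_def using assms e2 by (simp add: times_divide_eq_left add_divide_distrib[symmetric] diff_divide_distrib[symmetric])
  moreover have "k1*C1 + k2*C2 + k3*C3 = t3"
    unfolding k1_def k2_def k3_def using assms e3 by (simp add: times_divide_eq_left add_divide_distrib[symmetric] diff_divide_distrib[symmetric])
  ultimately show ?thesis by blast
qed

lemma SOL_deriv0:
  assumes "SOL a b c d e f w wx wy" "\<And>p. w p = 0"
  shows "wx (0,0) = 0" "wy (0,0) = 0"
proof -
  have "((\<lambda>t. w (t,0)) has_real_derivative wx (0,0)) (at 0)" using assms(1) unfolding SOL_def by blast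
  moreover have "((\<lambda>t. w (t,0)) has_real_derivative 0) (at 0)" using assms(2) by simp
  ultimately show "wx (0,0) = 0" using DERIV_unique by blast
  have "((\<lambda>t. w (0,t)) has_real_derivative wy (0,0)) (at 0)" using assms(1) unfolding SOL_def by blast
  moreover have "((\<lambda>t. w (0,t)) has_real_derivative 0) (at 0)" using assms(2) by simp
  ultimately show "wy (0,0) = 0" using DERIV_unique by blast
qed

lemma SOL_comb4:
  assumes "SOL a b c d e f w0 wx0 wy0" "SOL a b c d e f w1 wx1 wy1" "SOL a b c d e f w2 wx2 wy2"
    "SOL a b c d e f w3 wx3 wy3"
  shows "SOL a b c d e f (\<lambda>p. k0 * w0 p + (k1 * w1 p + k2 * w2 p + k3 * w3 p))
      (\<lambda>p. k0 * wx0 p + (k1 * wx1 p + k2 * wx2 p + k3 * wx3 p))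
      (\<lambda>p. k0 * wy0 p + (k1 * wy1 p + k2 * wy2 p + k3 * wy3 p))"
proof -
  have s1: "SOL a b c d e f (\<lambda>p. k1 * w1 p + k2 * w2 p) (\<lambda>p. k1 * wx1 p + k2 * wx2 p) (\<lambda>p. k1 * wy1 p + k2 * wy2 p)"
    by (rule SOL_lin[OF assms(2) assms(3)])
  have s2: "SOL a b c d e f (\<lambda>p. 1 * (k1 * w1 p + k2 * w2 p) + k3 * w3 p)
     (\<lambda>p. 1 * (k1 * wx1 p + k2 * wx2 p) + k3 * wx3 p) (\<lambda>p. 1 * (k1 * wy1 p + k2 * wy2 p) + k3 * wy3 p)"
    by (rule SOL_lin[OF s1 assms(4)])
  have s3: "SOL a b c d e f (\<lambda>p. k0 * w0 p + 1 * (1 * (k1 * w1 p + k2 * w2 p) + k3 * w3 p))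
     (\<lambda>p. k0 * wx0 p + 1 * (1 * (k1 * wx1 p + k2 * wx2 p) + k3 * wx3 p))
     (\<lambda>p. k0 * wy0 p + 1 * (1 * (k1 * wy1 p + k2 * wy2 p) + k3 * wy3 p))"
    by (rule SOL_lin[OF assms(1) s2])
  then show ?thesis by (simp only: mult_1_left)
qed

lemma span3:
  assumes S1: "SOL a b c d e f f1 (pd 1 f1) (pd 2 f1)" and S2: "SOL a b c d e f f2 (pd 1 f2) (pd 2 f2)"
    and S3: "SOL a b c d e f f3 (pd 1 f3) (pd 2 f3)" and Su: "SOL a b c d e f u (pd 1 u) (pd 2 u)"
    and det: "det3 (f1 (0,0)) (pd 1 f1 (0,0)) (pd 2 f1 (0,0)) (f2 (0,0)) (pd 1 f2 (0,0)) (pd 2 f2 (0,0))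
       (f3 (0,0)) (pd 1 f3 (0,0)) (pd 2 f3 (0,0)) \<noteq> 0"
  shows "\<exists>k1 k2 k3. u = (\<lambda>p. k1 * f1 p + k2 * f2 p + k3 * f3 p)"
proof -
  obtain k1 k2 k3 where k: "k1 * f1 (0,0) + k2 * f2 (0,0) + k3 * f3 (0,0) = u (0,0)"
    "k1 * pd 1 f1 (0,0) + k2 * pd 1 f2 (0,0) + k3 * pd 1 f3 (0,0) = pd 1 u (0,0)"
    "k1 * pd 2 f1 (0,0) + k2 * pd 2 f2 (0,0) + k3 * pd 2 f3 (0,0) = pd 2 u (0,0)"
    using cramer3[OF det, of "u (0,0)" "pd 1 u (0,0)" "pd 2 u (0,0)"] by blast
  note Sc = SOL_comb4[OF Su S1 S2 S3, of 1 "-k1" "-k2" "-k3"]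
  have "(\<lambda>p. 1 * u p + ((-k1) * f1 p + (-k2) * f2 p + (-k3) * f3 p)) (x,y) = 0" for x y
    by (rule SOL_zero[OF Sc]) (use k in simp_all)
  then have "u (x,y) = k1 * f1 (x,y) + k2 * f2 (x,y) + k3 * f3 (x,y)" for x y
    by (simp add: algebra_simps)
  then show ?thesis by (intro exI[of _ k1] exI[of _ k2] exI[of _ k3]) (auto simp: fun_eq_iff)
qed

lemma ind3:
  assumes S1: "SOL a b c d e f f1 (pd 1 f1) (pd 2 f1)" and S2: "SOL a b c d e f f2 (pd 1 f2) (pd 2 f2)"
    and S3: "SOL a b c d e f f3 (pd 1 f3) (pd 2 f3)"
    and det: "det3 (f1 (0,0)) (pd 1 f1 (0,0)) (pd 2 f1 (0,0)) (f2 (0,0)) (pd 1 f2 (0,0)) (pd 2 f2 (0,0))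
       (f3 (0,0)) (pd 1 f3 (0,0)) (pd 2 f3 (0,0)) \<noteq> 0"
    and z: "\<And>p. k1 * f1 p + k2 * f2 p + k3 * f3 p = 0"
  shows "k1 = 0 \<and> k2 = 0 \<and> k3 = 0"
proof -
  have S0: "SOL a b c d e f (\<lambda>p. 0) (\<lambda>p. 0) (\<lambda>p. 0)" unfolding SOL_def by simp
  note Sc = SOL_comb4[OF S0 S1 S2 S3, of 0 k1 k2 k3]
  have z': "\<And>p. 0 * 0 + (k1 * f1 p + k2 * f2 p + k3 * f3 p) = 0" using z by simp
  have "k1 * pd 1 f1 (0,0) + k2 * pd 1 f2 (0,0) + k3 * pd 1 f3 (0,0) = 0"
    using SOL_deriv0(1)[OF Sc z'] by simp
  moreover have "k1 * pd 2 f1 (0,0) + k2 * pd 2 f2 (0,0) + k3 * pd 2 f3 (0,0) = 0"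
    using SOL_deriv0(2)[OF Sc z'] by simp
  moreover have "k1 * f1 (0,0) + k2 * f2 (0,0) + k3 * f3 (0,0) = 0" using z by simp
  ultimately show ?thesis using indep3[OF det] by blast
qed

lemma basis3:
  fixes a b c d e f :: real
  defines "G \<equiv> GammaA a b c d e f"
  assumes f1: "f1 \<in> QE G" and f2: "f2 \<in> QE G" and f3: "f3 \<in> QE G"
    and det: "det3 (f1 (0,0)) (pd 1 f1 (0,0)) (pd 2 f1 (0,0)) (f2 (0,0)) (pd 1 f2 (0,0)) (pd 2 f2 (0,0))
       (f3 (0,0)) (pd 1 f3 (0,0)) (pd 2 f3 (0,0)) \<noteq> 0"
  shows "fin_basis (QE G) {f1, f2, f3}" "f1 \<noteq> f2" "f1 \<noteq> f3" "f2 \<noteq> f3"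
    "\<And>u. u \<in> QE G \<Longrightarrow> \<exists>k1 k2 k3. u = (\<lambda>p. k1 * f1 p + k2 * f2 p + k3 * f3 p)"
    "\<And>k1 k2 k3. (\<And>p. k1 * f1 p + k2 * f2 p + k3 * f3 p = 0) \<Longrightarrow> k1 = 0 \<and> k2 = 0 \<and> k3 = 0"
proof -
  show d12: "f1 \<noteq> f2"
  proof
    assume e: "f1 = f2"
    show False using det unfolding e det3_12 by simp
  qed
  show d13: "f1 \<noteq> f3"
  proof
    assume e: "f1 = f3"
    show False using det unfolding e det3_13 by simp
  qed
  show d23: "f2 \<noteq> f3"
  proof
    assume e: "f2 = f3"
    show False using det unfolding e det3_23 by simp
  qed
  have S1: "SOL a b c d e f f1 (pd 1 f1) (pd 2 f1)" using QE_SOL f1 unfolding G_def by blast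
  have S2: "SOL a b c d e f f2 (pd 1 f2) (pd 2 f2)" using QE_SOL f2 unfolding G_def by blast
  have S3: "SOL a b c d e f f3 (pd 1 f3) (pd 2 f3)" using QE_SOL f3 unfolding G_def by blast
  show span: "\<exists>k1 k2 k3. u = (\<lambda>p. k1 * f1 p + k2 * f2 p + k3 * f3 p)" if u: "u \<in> QE G" for u
    using span3[OF S1 S2 S3 _ det] QE_SOL u unfolding G_def by blast
  show ind: "k1 = 0 \<and> k2 = 0 \<and> k3 = 0" if z: "\<And>p. k1 * f1 p + k2 * f2 p + k3 * f3 p = 0" for k1 k2 k3
    using ind3[OF S1 S2 S3 det z] .
  show "fin_basis (QE G) {f1, f2, f3}"
    unfolding fin_basis_def
  proof (intro conjI ballI allI impI)
    show "finite {f1, f2, f3}" by simp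
    show "{f1, f2, f3} \<subseteq> QE G" using f1 f2 f3 by simp
  next
    fix u assume "u \<in> QE G"
    then obtain k1 k2 k3 where u: "u = (\<lambda>p. k1 * f1 p + k2 * f2 p + k3 * f3 p)" using span by blast
    define cc where "cc b = (if b = f1 then k1 else if b = f2 then k2 else k3)" for b
    have "u = (\<lambda>p. \<Sum>b\<in>{f1, f2, f3}. cc b * b p)"
      using d12 d13 d23 by (simp add: u cc_def add.assoc)
    then show "\<exists>c. u = (\<lambda>p. \<Sum>b\<in>{f1, f2, f3}. c b * b p)" by blast
  next
    fix cc :: "(real \<times> real \<Rightarrow> real) \<Rightarrow> real" and b
    assume z: "(\<lambda>p. \<Sum>b\<in>{f1, f2, f3}. cc b * b p) = (\<lambda>p. 0)" and b: "b \<in> {f1, f2, f3}"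
    have "cc f1 * f1 p + cc f2 * f2 p + cc f3 * f3 p = 0" for p
      using fun_cong[OF z, of p] d12 d13 d23 by (simp add: add.assoc)
    then have "cc f1 = 0 \<and> cc f2 = 0 \<and> cc f3 = 0" by (rule ind)
    then show "cc b = 0" using b by auto
  qed
qed

definition ofr :: "(real \<times> real \<Rightarrow> real) \<Rightarrow> real \<times> real \<Rightarrow> complex" where
  "ofr g = (\<lambda>p. complex_of_real (g p))"

lemma ofr_inj: "ofr g = ofr h \<longleftrightarrow> g = h"
  by (auto simp: ofr_def fun_eq_iff)

lemma zero_QE: "(\<lambda>p. 0) \<in> QE (GammaA a b c d e f)"
proof -
  have "RE 0 0 (\<lambda>k. 0) \<in> QE (GammaA a b c d e f)"
    by (rule QE_RE) (auto simp: dXc_def dYc_def)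
  moreover have "RE 0 0 (\<lambda>k. 0) = (\<lambda>p. 0)"
    by (auto simp: RE_def EP_def pol_def fun_eq_iff)
  ultimately show ?thesis by simp
qed

lemma cind3:
  fixes f1 f2 f3 :: "real \<times> real \<Rightarrow> real"
  assumes ind: "\<And>k1 k2 k3. (\<And>p. k1 * f1 p + k2 * f2 p + k3 * f3 p = 0) \<Longrightarrow> k1 = 0 \<and> k2 = 0 \<and> k3 = 0"
    and z: "\<And>p. c1 * complex_of_real (f1 p) + c2 * complex_of_real (f2 p) + c3 * complex_of_real (f3 p) = 0"
  shows "c1 = 0 \<and> c2 = 0 \<and> c3 = 0"
proof -
  have "Re c1 * f1 p + Re c2 * f2 p + Re c3 * f3 p = 0" for p
    using arg_cong[OF z[of p], of Re] by simp
  then have r: "Re c1 = 0 \<and> Re c2 = 0 \<and> Re c3 = 0" by (rule ind)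
  have "Im c1 * f1 p + Im c2 * f2 p + Im c3 * f3 p = 0" for p
    using arg_cong[OF z[of p], of Im] by simp
  then have i: "Im c1 = 0 \<and> Im c2 = 0 \<and> Im c3 = 0" by (rule ind)
  show ?thesis using r i by (simp add: complex_eq_iff)
qed

lemma sum3_eq:
  assumes "x1 \<noteq> x2" "x1 \<noteq> x3" "x2 \<noteq> x3"
  shows "(\<Sum>b\<in>{x1, x2, x3}. g b) = g x1 + g x2 + (g x3 :: complex)"
  using assms by (simp add: add.assoc)

lemma fin_basis3I:
  fixes S :: "(real \<times> real \<Rightarrow> complex) set"
  assumes d: "x1 \<noteq> x2" "x1 \<noteq> x3" "x2 \<noteq> x3"
    and sub: "x1 \<in> S" "x2 \<in> S" "x3 \<in> S"
    and span: "\<And>u. u \<in> S \<Longrightarrow> \<exists>c1 c2 c3. \<forall>p. u p = c1 * x1 p + c2 * x2 p + c3 * x3 p"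
    and ind: "\<And>c1 c2 c3. (\<And>p. c1 * x1 p + c2 * x2 p + c3 * x3 p = 0) \<Longrightarrow> c1 = 0 \<and> c2 = 0 \<and> c3 = 0"
  shows "fin_basis S {x1, x2, x3}"
  unfolding fin_basis_def
proof (intro conjI ballI allI impI)
  show "finite {x1, x2, x3}" by simp
  show "{x1, x2, x3} \<subseteq> S" using sub by simp
next
  fix u assume "u \<in> S"
  then obtain c1 c2 c3 where u: "\<forall>p. u p = c1 * x1 p + c2 * x2 p + c3 * x3 p" using span by blast
  define cc where "cc b = (if b = x1 then c1 else if b = x2 then c2 else c3)" for b
  have "(\<lambda>p. \<Sum>b\<in>{x1, x2, x3}. cc b * b p) = (\<lambda>p. c1 * x1 p + c2 * x2 p + c3 * x3 p)"
    using d d[symmetric] by (simp add: cc_def add.assoc)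
  also have "\<dots> = u" using u by (simp add: fun_eq_iff)
  finally have "u = (\<lambda>p. \<Sum>b\<in>{x1, x2, x3}. cc b * b p)" by simp
  then show "\<exists>c. u = (\<lambda>p. \<Sum>b\<in>{x1, x2, x3}. c b * b p)" by blast
next
  fix cc :: "(real \<times> real \<Rightarrow> complex) \<Rightarrow> complex" and b
  assume z: "(\<lambda>p. \<Sum>b\<in>{x1, x2, x3}. cc b * b p) = (\<lambda>p. 0)" and b: "b \<in> {x1, x2, x3}"
  have "cc x1 * x1 p + cc x2 * x2 p + cc x3 * x3 p = 0" for p
    using fun_cong[OF z, of p] d by (simp add: add.assoc)
  then have "cc x1 = 0 \<and> cc x2 = 0 \<and> cc x3 = 0" by (rule ind)
  then show "cc b = 0" using b by auto
qed

lemma cbasis_real: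
  fixes a b c d e f :: real
  defines "G \<equiv> GammaA a b c d e f"
  assumes f1: "f1 \<in> QE G" and f2: "f2 \<in> QE G" and f3: "f3 \<in> QE G"
    and det: "det3 (f1 (0,0)) (pd 1 f1 (0,0)) (pd 2 f1 (0,0)) (f2 (0,0)) (pd 1 f2 (0,0)) (pd 2 f2 (0,0))
       (f3 (0,0)) (pd 1 f3 (0,0)) (pd 2 f3 (0,0)) \<noteq> 0"
  shows "fin_basis (QEc G) {ofr f1, ofr f2, ofr f3}"
proof -
  note B = basis3[OF f1[unfolded G_def] f2[unfolded G_def] f3[unfolded G_def] det, folded G_def]
  have mem: "g \<in> QE G \<Longrightarrow> ofr g \<in> QEc G" for g
  proof -
    assume g: "g \<in> QE G"
    show "ofr g \<in> QEc G" unfolding QEc_def mem_Collect_eq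
      apply (rule exI[of _ g], rule exI[of _ "\<lambda>p. 0"])
      using zero_QE[of a b c d e f] g unfolding G_def by (simp add: ofr_def)
  qed
  show ?thesis
  proof (rule fin_basis3I)
    show "ofr f1 \<noteq> ofr f2" "ofr f1 \<noteq> ofr f3" "ofr f2 \<noteq> ofr f3" using B(2,3,4) by (simp_all add: ofr_inj)
    show "ofr f1 \<in> QEc G" "ofr f2 \<in> QEc G" "ofr f3 \<in> QEc G" using mem f1 f2 f3 by auto
  next
    fix u assume "u \<in> QEc G"
    then obtain g h where u: "u = (\<lambda>p. complex_of_real (g p) + \<i> * complex_of_real (h p))"
      and g: "g \<in> QE G" and h: "h \<in> QE G" unfolding QEc_def by blast
    obtain k1 k2 k3 where k: "g = (\<lambda>p. k1 * f1 p + k2 * f2 p + k3 * f3 p)" using B(5)[OF g] by blast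
    obtain m1 m2 m3 where m: "h = (\<lambda>p. m1 * f1 p + m2 * f2 p + m3 * f3 p)" using B(5)[OF h] by blast
    show "\<exists>c1 c2 c3. \<forall>p. u p = c1 * ofr f1 p + c2 * ofr f2 p + c3 * ofr f3 p"
    proof (rule exI[of _ "Complex k1 m1"], rule exI[of _ "Complex k2 m2"], rule exI[of _ "Complex k3 m3"], rule allI)
      fix p
      have up: "u p = complex_of_real (k1 * f1 p + k2 * f2 p + k3 * f3 p) + \<i> * complex_of_real (m1 * f1 p + m2 * f2 p + m3 * f3 p)"
      proof -
        have gp: "g p = k1 * f1 p + k2 * f2 p + k3 * f3 p" using k by simp
        have hp: "h p = m1 * f1 p + m2 * f2 p + m3 * f3 p" using m by simp
        show ?thesis unfolding u by (simp only: gp hp)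
      qed
      show "u p = Complex k1 m1 * ofr f1 p + Complex k2 m2 * ofr f2 p + Complex k3 m3 * ofr f3 p"
        unfolding up ofr_def by (simp add: complex_eq_iff)
    qed
  next
    fix c1 c2 c3 assume "\<And>p. c1 * ofr f1 p + c2 * ofr f2 p + c3 * ofr f3 p = 0"
    then have "\<And>p. c1 * complex_of_real (f1 p) + c2 * complex_of_real (f2 p) + c3 * complex_of_real (f3 p) = 0"
      unfolding ofr_def by simp
    from cind3[OF B(6) this] show "c1 = 0 \<and> c2 = 0 \<and> c3 = 0" .
  qed
qed

lemma det3_row2_0: "det3 A1 B1 C1 0 0 0 A3 B3 C3 = 0" by (simp add: det3_def)

lemma cbasis_conj:
  fixes a b c d e f :: real
  defines "G \<equiv> GammaA a b c d e f"
  assumes f1: "f1 \<in> QE G" and f2: "f2 \<in> QE G" and f3: "f3 \<in> QE G" and nf2: "(\<lambda>p. - f2 p) \<in> QE G"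
    and det: "det3 (f1 (0,0)) (pd 1 f1 (0,0)) (pd 2 f1 (0,0)) (f2 (0,0)) (pd 1 f2 (0,0)) (pd 2 f2 (0,0))
       (f3 (0,0)) (pd 1 f3 (0,0)) (pd 2 f3 (0,0)) \<noteq> 0"
  defines "ph1 \<equiv> (\<lambda>p. complex_of_real (f1 p) + \<i> * complex_of_real (f2 p))"
    and "ph2 \<equiv> (\<lambda>p. complex_of_real (f1 p) - \<i> * complex_of_real (f2 p))"
  shows "fin_basis (QEc G) {ph1, ph2, ofr f3}"
proof -
  note B = basis3[OF f1[unfolded G_def] f2[unfolded G_def] f3[unfolded G_def] det, folded G_def]
  have nz: "\<exists>p. f2 p \<noteq> 0"
  proof (rule ccontr)
    assume "\<not> (\<exists>p. f2 p \<noteq> 0)"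
    then have "f2 = (\<lambda>p. 0)" by (auto simp: fun_eq_iff)
    then show False using det by (simp add: pd_const det3_row2_0)
  qed
  then obtain p0 where p0: "f2 p0 \<noteq> 0" by blast
  show ?thesis
  proof (rule fin_basis3I)
    show "ph1 \<noteq> ph2"
    proof
      assume "ph1 = ph2"
      then have "Im (ph1 p0) = Im (ph2 p0)" by simp
      then show False using p0 by (simp add: ph1_def ph2_def)
    qed
    show "ph1 \<noteq> ofr f3"
    proof
      assume "ph1 = ofr f3"
      then have "Im (ph1 p0) = Im (ofr f3 p0)" by simp
      then show False using p0 by (simp add: ph1_def ofr_def)
    qed
    show "ph2 \<noteq> ofr f3"
    proof
      assume "ph2 = ofr f3"
      then have "Im (ph2 p0) = Im (ofr f3 p0)" by simp
      then show False using p0 by (simp add: ph2_def ofr_def)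
    qed
    show "ph1 \<in> QEc G" unfolding QEc_def mem_Collect_eq ph1_def
      using f1 f2 by blast
    show "ph2 \<in> QEc G" unfolding QEc_def mem_Collect_eq ph2_def
      apply (rule exI[of _ f1], rule exI[of _ "\<lambda>p. - f2 p"])
      using f1 nf2 by simp
    show "ofr f3 \<in> QEc G" unfolding QEc_def mem_Collect_eq
      apply (rule exI[of _ f3], rule exI[of _ "\<lambda>p. 0"])
      using f3 zero_QE[of a b c d e f] unfolding G_def by (simp add: ofr_def)
  next
    fix u assume "u \<in> QEc G"
    then obtain g h where u: "u = (\<lambda>p. complex_of_real (g p) + \<i> * complex_of_real (h p))"
      and g: "g \<in> QE G" and h: "h \<in> QE G" unfolding QEc_def by blast
    obtain k1 k2 k3 where k: "g = (\<lambda>p. k1 * f1 p + k2 * f2 p + k3 * f3 p)" using B(5)[OF g] by blast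
    obtain m1 m2 m3 where m: "h = (\<lambda>p. m1 * f1 p + m2 * f2 p + m3 * f3 p)" using B(5)[OF h] by blast
    define K1 where "K1 = Complex k1 m1"
    define K2 where "K2 = Complex k2 m2"
    define K3 where "K3 = Complex k3 m3"
    show "\<exists>c1 c2 c3. \<forall>p. u p = c1 * ph1 p + c2 * ph2 p + c3 * ofr f3 p"
    proof (rule exI[of _ "(K1 - \<i> * K2) / 2"], rule exI[of _ "(K1 + \<i> * K2) / 2"], rule exI[of _ K3], rule allI)
      fix p
      have gp: "g p = k1 * f1 p + k2 * f2 p + k3 * f3 p" using k by simp
      have hp: "h p = m1 * f1 p + m2 * f2 p + m3 * f3 p" using m by simp
      have up: "u p = complex_of_real (k1 * f1 p + k2 * f2 p + k3 * f3 p) + \<i> * complex_of_real (m1 * f1 p + m2 * f2 p + m3 * f3 p)"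
        unfolding u by (simp only: gp hp)
      show "u p = (K1 - \<i> * K2) / 2 * ph1 p + (K1 + \<i> * K2) / 2 * ph2 p + K3 * ofr f3 p"
        unfolding up ph1_def ph2_def ofr_def K1_def K2_def K3_def by (simp add: complex_eq_iff field_simps)
    qed
  next
    fix c1 c2 c3 assume z: "\<And>p. c1 * ph1 p + c2 * ph2 p + c3 * ofr f3 p = 0"
    have zz: "\<And>p. (c1 + c2) * complex_of_real (f1 p) + (\<i> * (c1 - c2)) * complex_of_real (f2 p) + c3 * complex_of_real (f3 p) = 0"
    proof -
      fix p
      have "(c1 + c2) * complex_of_real (f1 p) + (\<i> * (c1 - c2)) * complex_of_real (f2 p) + c3 * complex_of_real (f3 p)
        = c1 * ph1 p + c2 * ph2 p + c3 * ofr f3 p"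
        unfolding ph1_def ph2_def ofr_def by (simp add: algebra_simps)
      then show "(c1 + c2) * complex_of_real (f1 p) + (\<i> * (c1 - c2)) * complex_of_real (f2 p) + c3 * complex_of_real (f3 p) = 0"
        using z[of p] by simp
    qed
    have ind: "\<And>k1 k2 k3. (\<And>p. k1 * f1 p + k2 * f2 p + k3 * f3 p = 0) \<Longrightarrow> k1 = 0 \<and> k2 = 0 \<and> k3 = 0"
      by (rule B(6))
    have r: "Re (c1 + c2) = 0 \<and> Re (\<i> * (c1 - c2)) = 0 \<and> Re c3 = 0"
    proof (rule ind)
      fix p show "Re (c1 + c2) * f1 p + Re (\<i> * (c1 - c2)) * f2 p + Re c3 * f3 p = 0"
        using arg_cong[OF zz[of p], of Re] by simp
    qed
    have i: "Im (c1 + c2) = 0 \<and> Im (\<i> * (c1 - c2)) = 0 \<and> Im c3 = 0"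
    proof (rule ind)
      fix p show "Im (c1 + c2) * f1 p + Im (\<i> * (c1 - c2)) * f2 p + Im c3 * f3 p = 0"
        using arg_cong[OF zz[of p], of Im] by simp
    qed
    have "c1 + c2 = 0 \<and> \<i> * (c1 - c2) = 0 \<and> c3 = 0" using r i by (simp add: complex_eq_iff)
    then show "c1 = 0 \<and> c2 = 0 \<and> c3 = 0" by (auto simp: complex_eq_iff)
  qed
qed

lemma RE_0: "RE z1 z2 q (0,0) = Re (q 0)"
  by (simp add: RE_def EP_def pol_def)
lemma RE_pd1_0: "pd 1 (RE z1 z2 q) (0,0) = Re (z1 * q 0 + q 1)"
  unfolding pd1_RE by (simp add: RE_0 dXc_def)
lemma RE_pd2_0: "pd 2 (RE z1 z2 q) (0,0) = Re (z2 * q 0 + q 2)"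
  unfolding pd2_RE by (simp add: RE_0 dYc_def)

definition polr :: "(nat \<Rightarrow> real) \<Rightarrow> real \<Rightarrow> real \<Rightarrow> real" where
  "polr c x y = c 0 + c 1 * x + c 2 * y + c 3 * x^2 + c 4 * x * y + c 5 * y^2"

lemma EP_real: "EP (complex_of_real a1) (complex_of_real a2) (\<lambda>k. complex_of_real (r k)) (x,y)
   = complex_of_real (exp (a1 * x + a2 * y) * polr r x y)"
proof -
  have "exp (complex_of_real a1 * complex_of_real x + complex_of_real a2 * complex_of_real y)
     = complex_of_real (exp (a1 * x + a2 * y))"
    by (simp add: exp_of_real[symmetric])
  then show ?thesis by (simp add: EP_def pol_def polr_def)
qed

lemma RE_real: "RE (complex_of_real a1) (complex_of_real a2) (\<lambda>k. complex_of_real (r k)) p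
   = exp (a1 * fst p + a2 * snd p) * polr r (fst p) (snd p)"
  using EP_real[of a1 a2 r "fst p" "snd p"] by (simp add: RE_def)

lemma ofr_RE_real: "ofr (RE (complex_of_real a1) (complex_of_real a2) (\<lambda>k. complex_of_real (r k)))
   = EP (complex_of_real a1) (complex_of_real a2) (\<lambda>k. complex_of_real (r k))"
  by (auto simp: ofr_def RE_real EP_real fun_eq_iff)

lemma q0_real: "q0 (complex_of_real s) = (\<lambda>k. complex_of_real (if k = 0 then s else 0))"
  by (auto simp: q0_def fun_eq_iff)
lemma q1_real: "q1 (complex_of_real v1) (complex_of_real v2) = (\<lambda>k. complex_of_real (if k = 1 then v1 else if k = 2 then v2 else 0))"
  by (auto simp: q1_def fun_eq_iff)
lemma q2_real: "q2 (complex_of_real v1) (complex_of_real v2) (complex_of_real w1) (complex_of_real w2) =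
   (\<lambda>k. complex_of_real (if k = 1 then w1 else if k = 2 then w2 else if k = 3 then v1^2
      else if k = 4 then 2 * v1 * v2 else if k = 5 then v2^2 else 0))"
  by (auto simp: q2_def fun_eq_iff)

lemma E0_form: "RE (complex_of_real a1) (complex_of_real a2) (q0 1) = (\<lambda>p. exp ((\<lambda>(x,y). a1 * x + a2 * y) p))"
proof -
  have "q0 1 = (\<lambda>k. complex_of_real (if k = 0 then 1 else 0))" by (auto simp: q0_def fun_eq_iff)
  show ?thesis unfolding \<open>q0 1 = _\<close> by (auto simp: fun_eq_iff polr_def RE_real)
qed

lemma E1_form: "RE (complex_of_real a1) (complex_of_real a2) (q1 (complex_of_real v1) (complex_of_real v2))
   = (\<lambda>p. (\<lambda>(x,y). v1 * x + v2 * y) p * exp ((\<lambda>(x,y). a1 * x + a2 * y) p))"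
  unfolding q1_real by (auto simp: fun_eq_iff polr_def RE_real)

lemma E2_form: "RE (complex_of_real a1) (complex_of_real a2) (q2 (complex_of_real v1) (complex_of_real v2) (complex_of_real w1) (complex_of_real w2))
   = (\<lambda>p. (\<lambda>(x,y). 0 + w1 * x + w2 * y + v1^2 * x^2 + (2 * v1 * v2) * x * y + v2^2 * y^2) p * exp ((\<lambda>(x,y). a1 * x + a2 * y) p))"
  unfolding q2_real by (auto simp: fun_eq_iff polr_def RE_real)

lemma cos_form: "RE z1 z2 (q0 1) = (\<lambda>p. exp ((\<lambda>(x,y). Re z1 * x + Re z2 * y) p) * cos ((\<lambda>(x,y). Im z1 * x + Im z2 * y) p))"
  by (auto simp: fun_eq_iff RE_def EP_def pol_def q0_def Re_exp)

lemma sin_form: "RE z1 z2 (q0 (- \<i>)) = (\<lambda>p. exp ((\<lambda>(x,y). Re z1 * x + Re z2 * y) p) * sin ((\<lambda>(x,y). Im z1 * x + Im z2 * y) p))"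
  by (auto simp: fun_eq_iff RE_def EP_def pol_def q0_def Im_exp)

lemma nsin_form: "RE z1 z2 (q0 \<i>) = (\<lambda>p. - RE z1 z2 (q0 (- \<i>)) p)"
  by (auto simp: fun_eq_iff RE_def EP_def pol_def q0_def)

lemma conj_EP1: "EP z1 z2 (q0 1) = (\<lambda>p. complex_of_real (RE z1 z2 (q0 1) p) + \<i> * complex_of_real (RE z1 z2 (q0 (- \<i>)) p))"
  by (auto simp: fun_eq_iff RE_def EP_def pol_def q0_def complex_eq_iff)

lemma conj_EP2: "EP (cnj z1) (cnj z2) (q0 1) = (\<lambda>p. complex_of_real (RE z1 z2 (q0 1) p) - \<i> * complex_of_real (RE z1 z2 (q0 (- \<i>)) p))"
proof -
  have "exp (cnj z1 * complex_of_real x + cnj z2 * complex_of_real y) = cnj (exp (z1 * complex_of_real x + z2 * complex_of_real y))" for x y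
    by (simp add: exp_cnj)
  then show ?thesis by (auto simp: fun_eq_iff RE_def EP_def pol_def q0_def complex_eq_iff)
qed

definition P1 :: "real \<Rightarrow> real \<Rightarrow> real \<Rightarrow> real \<Rightarrow> real \<Rightarrow> real \<Rightarrow> bool" where
  "P1 a b c d e f \<longleftrightarrow> (\<exists>B. fin_basis (QEc (GammaA a b c d e f)) B \<and>
       (\<forall>u\<in>B. \<exists>(\<alpha>1::complex) \<alpha>2 (p0::complex) p1 p2 p3 p4 p5.
          (\<lambda>(x, y). exp (\<alpha>1 * complex_of_real x + \<alpha>2 * complex_of_real y)) \<in> QEc (GammaA a b c d e f) \<and>
          u = (\<lambda>(x, y). exp (\<alpha>1 * complex_of_real x + \<alpha>2 * complex_of_real y) *
                 (p0 + p1 * complex_of_real x + p2 * complex_of_real y + p3 * (complex_of_real x)\<^sup>2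
                  + p4 * complex_of_real x * complex_of_real y + p5 * (complex_of_real y)\<^sup>2))))"

definition P2 :: "real \<Rightarrow> real \<Rightarrow> real \<Rightarrow> real \<Rightarrow> real \<Rightarrow> real \<Rightarrow> bool" where
  "P2 a b c d e f \<longleftrightarrow> (\<exists>L1 L2 L3 Q B. real_linear_fn L1 \<and> real_linear_fn L2 \<and> real_linear_fn L3 \<and> real_poly_deg2 Q \<and>
       fin_basis (QE (GammaA a b c d e f)) B \<and>
       (B = {(\<lambda>p. exp (L1 p) * cos (L2 p)), (\<lambda>p. exp (L1 p) * sin (L2 p)), (\<lambda>p. exp (L3 p))}
      \<or> B = {(\<lambda>p. exp (L1 p)), (\<lambda>p. exp (L2 p)), (\<lambda>p. exp (L3 p))}
      \<or> B = {(\<lambda>p. exp (L1 p)), (\<lambda>p. L2 p * exp (L1 p)), (\<lambda>p. exp (L3 p))}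
      \<or> B = {(\<lambda>p. exp (L1 p)), (\<lambda>p. L2 p * exp (L1 p)), (\<lambda>p. Q p * exp (L1 p))}))"

lemma EP_QEc:
  assumes "RE z1 z2 (q0 1) \<in> QE G" "RE z1 z2 (q0 (- \<i>)) \<in> QE G"
  shows "(\<lambda>(x, y). exp (z1 * complex_of_real x + z2 * complex_of_real y)) \<in> QEc G"
proof -
  have "(\<lambda>(x, y). exp (z1 * complex_of_real x + z2 * complex_of_real y)) = EP z1 z2 (q0 1)"
    by (auto simp: EP_def pol_def q0_def fun_eq_iff)
  also have "\<dots> = (\<lambda>p. complex_of_real (RE z1 z2 (q0 1) p) + \<i> * complex_of_real (RE z1 z2 (q0 (- \<i>)) p))"
    by (rule conj_EP1)
  finally have eq: "(\<lambda>(x, y). exp (z1 * complex_of_real x + z2 * complex_of_real y)) = (\<lambda>p. complex_of_real (RE z1 z2 (q0 1) p) + \<i> * complex_of_real (RE z1 z2 (q0 (- \<i>)) p))" .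
  show ?thesis unfolding eq QEc_def mem_Collect_eq
    apply (rule exI[of _ "RE z1 z2 (q0 1)"], rule exI[of _ "RE z1 z2 (q0 (- \<i>))"])
    using assms by simp
qed

lemma EPc_QEc:
  assumes "RE z1 z2 (q0 1) \<in> QE G" "RE z1 z2 (q0 \<i>) \<in> QE G"
  shows "(\<lambda>(x, y). exp (cnj z1 * complex_of_real x + cnj z2 * complex_of_real y)) \<in> QEc G"
proof -
  have "(\<lambda>(x, y). exp (cnj z1 * complex_of_real x + cnj z2 * complex_of_real y)) = EP (cnj z1) (cnj z2) (q0 1)"
    by (auto simp: EP_def pol_def q0_def fun_eq_iff)
  also have "\<dots> = (\<lambda>p. complex_of_real (RE z1 z2 (q0 1) p) + \<i> * complex_of_real (RE z1 z2 (q0 \<i>) p))"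
    unfolding conj_EP2 nsin_form by (simp add: fun_eq_iff)
  finally have eq: "(\<lambda>(x, y). exp (cnj z1 * complex_of_real x + cnj z2 * complex_of_real y)) = (\<lambda>p. complex_of_real (RE z1 z2 (q0 1) p) + \<i> * complex_of_real (RE z1 z2 (q0 \<i>) p))" .
  show ?thesis unfolding eq QEc_def mem_Collect_eq
    apply (rule exI[of _ "RE z1 z2 (q0 1)"], rule exI[of _ "RE z1 z2 (q0 \<i>)"])
    using assms by simp
qed

lemma EP_shape:
  assumes "(\<lambda>(x, y). exp (z1 * complex_of_real x + z2 * complex_of_real y)) \<in> QEc G"
  shows "\<exists>(\<alpha>1::complex) \<alpha>2 (p0::complex) p1 p2 p3 p4 p5.
          (\<lambda>(x, y). exp (\<alpha>1 * complex_of_real x + \<alpha>2 * complex_of_real y)) \<in> QEc G \<and>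
          EP z1 z2 q = (\<lambda>(x, y). exp (\<alpha>1 * complex_of_real x + \<alpha>2 * complex_of_real y) *
                 (p0 + p1 * complex_of_real x + p2 * complex_of_real y + p3 * (complex_of_real x)\<^sup>2
                  + p4 * complex_of_real x * complex_of_real y + p5 * (complex_of_real y)\<^sup>2))"
  apply (rule exI[of _ z1], rule exI[of _ z2], rule exI[of _ "q 0"], rule exI[of _ "q 1"], rule exI[of _ "q 2"],
      rule exI[of _ "q 3"], rule exI[of _ "q 4"], rule exI[of _ "q 5"])
  using assms by (simp add: EP_def pol_def)

lemma ofr_E0: "ofr (RE (complex_of_real a1) (complex_of_real a2) (q0 1)) = EP (complex_of_real a1) (complex_of_real a2) (q0 1)"
proof -
  have "q0 1 = (\<lambda>k. complex_of_real (if k = 0 then 1 else 0))" by (auto simp: q0_def fun_eq_iff)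
  show ?thesis unfolding \<open>q0 1 = _\<close> by (rule ofr_RE_real)
qed
lemma ofr_E1: "ofr (RE (complex_of_real a1) (complex_of_real a2) (q1 (complex_of_real v1) (complex_of_real v2)))
   = EP (complex_of_real a1) (complex_of_real a2) (q1 (complex_of_real v1) (complex_of_real v2))"
  unfolding q1_real by (rule ofr_RE_real)
lemma ofr_E2: "ofr (RE (complex_of_real a1) (complex_of_real a2) (q2 (complex_of_real v1) (complex_of_real v2) (complex_of_real w1) (complex_of_real w2)))
   = EP (complex_of_real a1) (complex_of_real a2) (q2 (complex_of_real v1) (complex_of_real v2) (complex_of_real w1) (complex_of_real w2))"
  unfolding q2_real by (rule ofr_RE_real)

lemma P1_real:
  fixes a b c d e f :: real
  defines "G \<equiv> GammaA a b c d e f"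
  assumes f1: "f1 \<in> QE G" and f2: "f2 \<in> QE G" and f3: "f3 \<in> QE G"
    and det: "det3 (f1 (0,0)) (pd 1 f1 (0,0)) (pd 2 f1 (0,0)) (f2 (0,0)) (pd 1 f2 (0,0)) (pd 2 f2 (0,0))
       (f3 (0,0)) (pd 1 f3 (0,0)) (pd 2 f3 (0,0)) \<noteq> 0"
    and e1: "ofr f1 = EP x1 y1 r1" "(\<lambda>(x, y). exp (x1 * complex_of_real x + y1 * complex_of_real y)) \<in> QEc G"
    and e2: "ofr f2 = EP x2 y2 r2" "(\<lambda>(x, y). exp (x2 * complex_of_real x + y2 * complex_of_real y)) \<in> QEc G"
    and e3: "ofr f3 = EP x3 y3 r3" "(\<lambda>(x, y). exp (x3 * complex_of_real x + y3 * complex_of_real y)) \<in> QEc G"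
  shows "P1 a b c d e f"
  unfolding P1_def
proof (intro exI conjI)
  show "fin_basis (QEc (GammaA a b c d e f)) {ofr f1, ofr f2, ofr f3}"
    using cbasis_real[OF f1[unfolded G_def] f2[unfolded G_def] f3[unfolded G_def] det] .
  show "\<forall>u\<in>{ofr f1, ofr f2, ofr f3}. \<exists>(\<alpha>1::complex) \<alpha>2 (p0::complex) p1 p2 p3 p4 p5.
          (\<lambda>(x, y). exp (\<alpha>1 * complex_of_real x + \<alpha>2 * complex_of_real y)) \<in> QEc (GammaA a b c d e f) \<and>
          u = (\<lambda>(x, y). exp (\<alpha>1 * complex_of_real x + \<alpha>2 * complex_of_real y) *
                 (p0 + p1 * complex_of_real x + p2 * complex_of_real y + p3 * (complex_of_real x)\<^sup>2
                  + p4 * complex_of_real x * complex_of_real y + p5 * (complex_of_real y)\<^sup>2))"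
    unfolding e1(1) e2(1) e3(1)
  proof (intro ballI)
    fix u assume "u \<in> {EP x1 y1 r1, EP x2 y2 r2, EP x3 y3 r3}"
    then consider "u = EP x1 y1 r1" | "u = EP x2 y2 r2" | "u = EP x3 y3 r3" by fast
    then show "\<exists>(\<alpha>1::complex) \<alpha>2 (p0::complex) p1 p2 p3 p4 p5.
          (\<lambda>(x, y). exp (\<alpha>1 * complex_of_real x + \<alpha>2 * complex_of_real y)) \<in> QEc (GammaA a b c d e f) \<and>
          u = (\<lambda>(x, y). exp (\<alpha>1 * complex_of_real x + \<alpha>2 * complex_of_real y) *
                 (p0 + p1 * complex_of_real x + p2 * complex_of_real y + p3 * (complex_of_real x)\<^sup>2
                  + p4 * complex_of_real x * complex_of_real y + p5 * (complex_of_real y)\<^sup>2))"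
    proof cases
      case 1 then show ?thesis using EP_shape[OF e1(2)[unfolded G_def], of r1] by simp
    next
      case 2 then show ?thesis using EP_shape[OF e2(2)[unfolded G_def], of r2] by simp
    next
      case 3 then show ?thesis using EP_shape[OF e3(2)[unfolded G_def], of r3] by simp
    qed
  qed
qed

lemma rlf: "real_linear_fn (\<lambda>(x,y). a1 * x + a2 * y)"
  unfolding real_linear_fn_def by blast

lemma rpd_zero: "real_poly_deg2 (\<lambda>(x,y). 0)"
  unfolding real_poly_deg2_def
  apply (rule exI[of _ 0], rule exI[of _ 0], rule exI[of _ 0], rule exI[of _ 0], rule exI[of _ 0], rule exI[of _ 0])
  by simp

lemma rpd_Q: "real_poly_deg2 (\<lambda>(x,y). 0 + w1 * x + w2 * y + v1^2 * x^2 + (2 * v1 * v2) * x * y + v2^2 * y^2)"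
  unfolding real_poly_deg2_def by blast

lemma dat0: "RE z1 z2 (q0 s) (0,0) = Re s" "pd 1 (RE z1 z2 (q0 s)) (0,0) = Re (z1 * s)"
   "pd 2 (RE z1 z2 (q0 s)) (0,0) = Re (z2 * s)"
  unfolding RE_0 RE_pd1_0 RE_pd2_0 by (simp_all add: q0_def)
lemma dat1: "RE z1 z2 (q1 v1 v2) (0,0) = 0" "pd 1 (RE z1 z2 (q1 v1 v2)) (0,0) = Re v1"
   "pd 2 (RE z1 z2 (q1 v1 v2)) (0,0) = Re v2"
  unfolding RE_0 RE_pd1_0 RE_pd2_0 by (simp_all add: q1_def)
lemma dat2: "RE z1 z2 (q2 v1 v2 w1 w2) (0,0) = 0" "pd 1 (RE z1 z2 (q2 v1 v2 w1 w2)) (0,0) = Re w1"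
   "pd 2 (RE z1 z2 (q2 v1 v2 w1 w2)) (0,0) = Re w2"
  unfolding RE_0 RE_pd1_0 RE_pd2_0 by (simp_all add: q2_def)

lemma expQEc_real:
  assumes "Vc a b c d e f (complex_of_real x1) (complex_of_real y1)"
  shows "(\<lambda>(x, y). exp (complex_of_real x1 * complex_of_real x + complex_of_real y1 * complex_of_real y)) \<in> QEc (GammaA a b c d e f)"
  by (rule EP_QEc[OF T0[OF assms] T0[OF assms]])

lemma F2:
  fixes a b c d e f :: real
  assumes V1: "Vc a b c d e f (complex_of_real x1) (complex_of_real y1)"
    and V2: "Vc a b c d e f (complex_of_real x2) (complex_of_real y2)"
    and V3: "Vc a b c d e f (complex_of_real x3) (complex_of_real y3)"
    and det: "det3 1 x1 y1 1 x2 y2 1 x3 y3 \<noteq> 0"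
  shows "P1 a b c d e f \<and> P2 a b c d e f"
proof -
  define f1 where "f1 = RE (complex_of_real x1) (complex_of_real y1) (q0 1)"
  define f2 where "f2 = RE (complex_of_real x2) (complex_of_real y2) (q0 1)"
  define f3 where "f3 = RE (complex_of_real x3) (complex_of_real y3) (q0 1)"
  have m1: "f1 \<in> QE (GammaA a b c d e f)" unfolding f1_def by (rule T0[OF V1])
  have m2: "f2 \<in> QE (GammaA a b c d e f)" unfolding f2_def by (rule T0[OF V2])
  have m3: "f3 \<in> QE (GammaA a b c d e f)" unfolding f3_def by (rule T0[OF V3])
  have D: "det3 (f1 (0,0)) (pd 1 f1 (0,0)) (pd 2 f1 (0,0)) (f2 (0,0)) (pd 1 f2 (0,0)) (pd 2 f2 (0,0))
       (f3 (0,0)) (pd 1 f3 (0,0)) (pd 2 f3 (0,0)) \<noteq> 0"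
    unfolding f1_def f2_def f3_def dat0 using det by simp
  note B = basis3[OF m1 m2 m3 D]
  have "P2 a b c d e f"
    unfolding P2_def
    apply (rule exI[of _ "\<lambda>(x,y). x1 * x + y1 * y"], rule exI[of _ "\<lambda>(x,y). x2 * x + y2 * y"],
        rule exI[of _ "\<lambda>(x,y). x3 * x + y3 * y"], rule exI[of _ "\<lambda>(x,y). 0"], rule exI[of _ "{f1, f2, f3}"])
    using B(1) rlf rpd_zero unfolding f1_def f2_def f3_def E0_form by simp
  moreover have "P1 a b c d e f"
    by (rule P1_real[OF m1 m2 m3 D, unfolded f1_def f2_def f3_def, OF ofr_E0 expQEc_real[OF V1]
          ofr_E0 expQEc_real[OF V2] ofr_E0 expQEc_real[OF V3]])
  ultimately show ?thesis by simp
qed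

lemma P1_gen:
  assumes fb: "fin_basis (QEc (GammaA a b c d e f)) {EP x1 y1 r1, EP x2 y2 r2, EP x3 y3 r3}"
    and e1: "(\<lambda>(x, y). exp (x1 * complex_of_real x + y1 * complex_of_real y)) \<in> QEc (GammaA a b c d e f)"
    and e2: "(\<lambda>(x, y). exp (x2 * complex_of_real x + y2 * complex_of_real y)) \<in> QEc (GammaA a b c d e f)"
    and e3: "(\<lambda>(x, y). exp (x3 * complex_of_real x + y3 * complex_of_real y)) \<in> QEc (GammaA a b c d e f)"
  shows "P1 a b c d e f"
  unfolding P1_def
proof (rule exI[of _ "{EP x1 y1 r1, EP x2 y2 r2, EP x3 y3 r3}"], intro conjI fb ballI)
  fix u assume "u \<in> {EP x1 y1 r1, EP x2 y2 r2, EP x3 y3 r3}"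
  then consider "u = EP x1 y1 r1" | "u = EP x2 y2 r2" | "u = EP x3 y3 r3" by fast
  then show "\<exists>(\<alpha>1::complex) \<alpha>2 (p0::complex) p1 p2 p3 p4 p5.
        (\<lambda>(x, y). exp (\<alpha>1 * complex_of_real x + \<alpha>2 * complex_of_real y)) \<in> QEc (GammaA a b c d e f) \<and>
        u = (\<lambda>(x, y). exp (\<alpha>1 * complex_of_real x + \<alpha>2 * complex_of_real y) *
               (p0 + p1 * complex_of_real x + p2 * complex_of_real y + p3 * (complex_of_real x)\<^sup>2
                + p4 * complex_of_real x * complex_of_real y + p5 * (complex_of_real y)\<^sup>2))"
  proof cases
    case 1 then show ?thesis using EP_shape[OF e1, of r1] by simp
  next
    case 2 then show ?thesis using EP_shape[OF e2, of r2] by simp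
  next
    case 3 then show ?thesis using EP_shape[OF e3, of r3] by simp
  qed
qed

lemma F3:
  fixes a b c d e f :: real
  assumes V1: "Vc a b c d e f (complex_of_real x1) (complex_of_real y1)"
    and J1: "Jc a b c d e f (complex_of_real x1) (complex_of_real y1) (complex_of_real v1) (complex_of_real v2)"
    and V3: "Vc a b c d e f (complex_of_real x3) (complex_of_real y3)"
    and det: "det3 1 x1 y1 0 v1 v2 1 x3 y3 \<noteq> 0"
  shows "P1 a b c d e f \<and> P2 a b c d e f"
proof -
  define f1 where "f1 = RE (complex_of_real x1) (complex_of_real y1) (q0 1)"
  define f2 where "f2 = RE (complex_of_real x1) (complex_of_real y1) (q1 (complex_of_real v1) (complex_of_real v2))"
  define f3 where "f3 = RE (complex_of_real x3) (complex_of_real y3) (q0 1)"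
  have m1: "f1 \<in> QE (GammaA a b c d e f)" unfolding f1_def by (rule T0[OF V1])
  have m2: "f2 \<in> QE (GammaA a b c d e f)" unfolding f2_def by (rule T1[OF V1 J1])
  have m3: "f3 \<in> QE (GammaA a b c d e f)" unfolding f3_def by (rule T0[OF V3])
  have D: "det3 (f1 (0,0)) (pd 1 f1 (0,0)) (pd 2 f1 (0,0)) (f2 (0,0)) (pd 1 f2 (0,0)) (pd 2 f2 (0,0))
       (f3 (0,0)) (pd 1 f3 (0,0)) (pd 2 f3 (0,0)) \<noteq> 0"
    unfolding f1_def f2_def f3_def dat0 dat1 using det by simp
  note B = basis3[OF m1 m2 m3 D]
  have "P2 a b c d e f"
    unfolding P2_def
    apply (rule exI[of _ "\<lambda>(x,y). x1 * x + y1 * y"], rule exI[of _ "\<lambda>(x,y). v1 * x + v2 * y"],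
        rule exI[of _ "\<lambda>(x,y). x3 * x + y3 * y"], rule exI[of _ "\<lambda>(x,y). 0"], rule exI[of _ "{f1, f2, f3}"])
    using B(1) rlf rpd_zero unfolding f1_def f2_def f3_def E0_form E1_form by simp
  moreover have "P1 a b c d e f"
    by (rule P1_real[OF m1 m2 m3 D, unfolded f1_def f2_def f3_def, OF ofr_E0 expQEc_real[OF V1]
          ofr_E1 expQEc_real[OF V1] ofr_E0 expQEc_real[OF V3]])
  ultimately show ?thesis by simp
qed

lemma F4:
  fixes a b c d e f :: real
  assumes V1: "Vc a b c d e f (complex_of_real x1) (complex_of_real y1)"
    and J1: "Jc a b c d e f (complex_of_real x1) (complex_of_real y1) (complex_of_real v1) (complex_of_real v2)"
    and J2: "Jc a b c d e f (complex_of_real x1) (complex_of_real y1) (complex_of_real u1) (complex_of_real u2)"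
    and TT: "Tc a b c d e f (complex_of_real x1) (complex_of_real y1) (complex_of_real u1) (complex_of_real u2)
        (complex_of_real w1) (complex_of_real w2)"
    and det: "det3 1 x1 y1 0 v1 v2 0 w1 w2 \<noteq> 0"
  shows "P1 a b c d e f \<and> P2 a b c d e f"
proof -
  define f1 where "f1 = RE (complex_of_real x1) (complex_of_real y1) (q0 1)"
  define f2 where "f2 = RE (complex_of_real x1) (complex_of_real y1) (q1 (complex_of_real v1) (complex_of_real v2))"
  define f3 where "f3 = RE (complex_of_real x1) (complex_of_real y1) (q2 (complex_of_real u1) (complex_of_real u2) (complex_of_real w1) (complex_of_real w2))"
  have m1: "f1 \<in> QE (GammaA a b c d e f)" unfolding f1_def by (rule T0[OF V1])
  have m2: "f2 \<in> QE (GammaA a b c d e f)" unfolding f2_def by (rule T1[OF V1 J1])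
  have m3: "f3 \<in> QE (GammaA a b c d e f)" unfolding f3_def by (rule T2[OF V1 J2 TT])
  have D: "det3 (f1 (0,0)) (pd 1 f1 (0,0)) (pd 2 f1 (0,0)) (f2 (0,0)) (pd 1 f2 (0,0)) (pd 2 f2 (0,0))
       (f3 (0,0)) (pd 1 f3 (0,0)) (pd 2 f3 (0,0)) \<noteq> 0"
    unfolding f1_def f2_def f3_def dat0 dat1 dat2 using det by simp
  note B = basis3[OF m1 m2 m3 D]
  have "P2 a b c d e f"
    unfolding P2_def
    apply (rule exI[of _ "\<lambda>(x,y). x1 * x + y1 * y"], rule exI[of _ "\<lambda>(x,y). v1 * x + v2 * y"],
        rule exI[of _ "\<lambda>(x,y). x1 * x + y1 * y"],
        rule exI[of _ "\<lambda>(x,y). 0 + w1 * x + w2 * y + u1^2 * x^2 + (2 * u1 * u2) * x * y + u2^2 * y^2"],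
        rule exI[of _ "{f1, f2, f3}"])
    using B(1) rlf rpd_Q unfolding f1_def f2_def f3_def E0_form E1_form E2_form by simp
  moreover have "P1 a b c d e f"
    by (rule P1_real[OF m1 m2 m3 D, unfolded f1_def f2_def f3_def, OF ofr_E0 expQEc_real[OF V1]
          ofr_E1 expQEc_real[OF V1] ofr_E2 expQEc_real[OF V1]])
  ultimately show ?thesis by simp
qed

lemma F1:
  fixes a b c d e f :: real
  assumes V1: "Vc a b c d e f z1 z2"
    and V3: "Vc a b c d e f (complex_of_real x3) (complex_of_real y3)"
    and det: "det3 1 (Re z1) (Re z2) 0 (Im z1) (Im z2) 1 x3 y3 \<noteq> 0"
  shows "P1 a b c d e f \<and> P2 a b c d e f"
proof -
  define f1 where "f1 = RE z1 z2 (q0 1)"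
  define f2 where "f2 = RE z1 z2 (q0 (- \<i>))"
  define f3 where "f3 = RE (complex_of_real x3) (complex_of_real y3) (q0 1)"
  have m1: "f1 \<in> QE (GammaA a b c d e f)" unfolding f1_def by (rule T0[OF V1])
  have m2: "f2 \<in> QE (GammaA a b c d e f)" unfolding f2_def by (rule T0[OF V1])
  have m3: "f3 \<in> QE (GammaA a b c d e f)" unfolding f3_def by (rule T0[OF V3])
  have n2: "(\<lambda>p. - f2 p) \<in> QE (GammaA a b c d e f)" unfolding f2_def nsin_form[symmetric] by (rule T0[OF V1])
  have D: "det3 (f1 (0,0)) (pd 1 f1 (0,0)) (pd 2 f1 (0,0)) (f2 (0,0)) (pd 1 f2 (0,0)) (pd 2 f2 (0,0))
       (f3 (0,0)) (pd 1 f3 (0,0)) (pd 2 f3 (0,0)) \<noteq> 0"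
    unfolding f1_def f2_def f3_def dat0 using det by simp
  note B = basis3[OF m1 m2 m3 D]
  have "P2 a b c d e f"
    unfolding P2_def
    apply (rule exI[of _ "\<lambda>(x,y). Re z1 * x + Re z2 * y"], rule exI[of _ "\<lambda>(x,y). Im z1 * x + Im z2 * y"],
        rule exI[of _ "\<lambda>(x,y). x3 * x + y3 * y"], rule exI[of _ "\<lambda>(x,y). 0"], rule exI[of _ "{f1, f2, f3}"])
    using B(1) rlf rpd_zero unfolding f1_def f2_def f3_def E0_form cos_form sin_form by simp
  moreover have "P1 a b c d e f"
  proof (rule P1_gen)
    have "fin_basis (QEc (GammaA a b c d e f)) {(\<lambda>p. complex_of_real (f1 p) + \<i> * complex_of_real (f2 p)),
        (\<lambda>p. complex_of_real (f1 p) - \<i> * complex_of_real (f2 p)), ofr f3}"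
      by (rule cbasis_conj[OF m1 m2 m3 n2 D])
    moreover have e1: "(\<lambda>p. complex_of_real (f1 p) + \<i> * complex_of_real (f2 p)) = EP z1 z2 (q0 1)"
      unfolding f1_def f2_def by (rule conj_EP1[symmetric])
    moreover have e2: "(\<lambda>p. complex_of_real (f1 p) - \<i> * complex_of_real (f2 p)) = EP (cnj z1) (cnj z2) (q0 1)"
      unfolding f1_def f2_def by (rule conj_EP2[symmetric])
    moreover have e3: "ofr f3 = EP (complex_of_real x3) (complex_of_real y3) (q0 1)"
      unfolding f3_def by (rule ofr_E0)
    ultimately show "fin_basis (QEc (GammaA a b c d e f)) {EP z1 z2 (q0 1), EP (cnj z1) (cnj z2) (q0 1),
        EP (complex_of_real x3) (complex_of_real y3) (q0 1)}" by simp
    show "(\<lambda>(x, y). exp (z1 * complex_of_real x + z2 * complex_of_real y)) \<in> QEc (GammaA a b c d e f)"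
      by (rule EP_QEc[OF T0[OF V1] T0[OF V1]])
    show "(\<lambda>(x, y). exp (cnj z1 * complex_of_real x + cnj z2 * complex_of_real y)) \<in> QEc (GammaA a b c d e f)"
      by (rule EPc_QEc[OF T0[OF V1] T0[OF V1]])
    show "(\<lambda>(x, y). exp (complex_of_real x3 * complex_of_real x + complex_of_real y3 * complex_of_real y)) \<in> QEc (GammaA a b c d e f)"
      by (rule expQEc_real[OF V3])
  qed
  ultimately show ?thesis by simp
qed

lemma cubic_root:
  fixes A B C :: real
  shows "\<exists>x. x^3 + A * x^2 + B * x + C = 0"
proof -
  define M where "M = 1 + \<bar>A\<bar> + \<bar>B\<bar> + \<bar>C\<bar>"
  have M1: "M \<ge> 1" unfolding M_def by simp
  have M2: "M^2 \<ge> M" using M1 by (simp add: power2_eq_square)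
  have M2': "M^2 \<ge> 1" using M1 M2 by linarith
  have a1: "A * M^2 \<ge> - (\<bar>A\<bar> * M^2)" using mult_right_mono[of "-A" "\<bar>A\<bar>" "M^2"] abs_ge_minus_self[of A] by simp
  have b0: "\<bar>B\<bar> * M \<le> \<bar>B\<bar> * M^2" using M2 by (simp add: mult_left_mono)
  have b1: "B * M \<ge> - (\<bar>B\<bar> * M)" using M1 mult_right_mono[of "-B" "\<bar>B\<bar>" M] abs_ge_minus_self[of B] by simp
  have b2: "B * M \<le> \<bar>B\<bar> * M" using M1 mult_right_mono[of B "\<bar>B\<bar>" M] abs_ge_self[of B] by simp
  have c0: "\<bar>C\<bar> \<le> \<bar>C\<bar> * M^2" using M2' mult_left_mono[of 1 "M^2" "\<bar>C\<bar>"] by simp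
  have a2: "A * M^2 \<le> \<bar>A\<bar> * M^2" by (simp add: mult_right_mono)
  have m3: "M^3 = M * M^2" by (simp add: power2_eq_square power3_eq_cube)
  have key: "M * M^2 - (\<bar>A\<bar> * M^2 + \<bar>B\<bar> * M^2 + \<bar>C\<bar> * M^2) = M^2"
    unfolding M_def by (simp add: algebra_simps)
  have pos: "M^3 + A * M^2 + B * M + C \<ge> 0"
    using a1 b0 b1 c0 m3 key abs_ge_minus_self[of C] M2' by linarith
  have neg: "(-M)^3 + A * (-M)^2 + B * (-M) + C \<le> 0"
  proof -
    have "(-M)^3 + A * (-M)^2 + B * (-M) + C = -(M * M^2) + A * M^2 - B * M + C"
      by (simp add: power2_eq_square power3_eq_cube)
    then show ?thesis using a2 b0 b1 b2 c0 key abs_ge_self[of C] M2' by linarith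
  qed
  have "\<exists>x. -M \<le> x \<and> x \<le> M \<and> x^3 + A * x^2 + B * x + C = 0"
    by (rule IVT[of "\<lambda>x. x^3 + A * x^2 + B * x + C" "-M" 0 M]) (use pos neg M1 in \<open>auto intro!: continuous_intros\<close>)
  then show ?thesis by blast
qed

definition Vxy :: "'a::comm_ring_1 \<Rightarrow> 'a \<Rightarrow> 'a \<Rightarrow> 'a \<Rightarrow> 'a \<Rightarrow> 'a \<Rightarrow> bool" where
  "Vxy P R b e X Y \<longleftrightarrow> X * (X + P) = b * (Y + R) \<and> X * Y = b * e \<and> Y * (Y + R) = e * (X + P)"
definition Jxy :: "'a::comm_ring_1 \<Rightarrow> 'a \<Rightarrow> 'a \<Rightarrow> 'a \<Rightarrow> 'a \<Rightarrow> 'a \<Rightarrow> 'a \<Rightarrow> 'a \<Rightarrow> bool" where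
  "Jxy P R b e X Y v1 v2 \<longleftrightarrow> (2*X + P) * v1 - b * v2 = 0 \<and> Y * v1 + X * v2 = 0 \<and> - e * v1 + (2*Y + R) * v2 = 0"
definition Txy :: "'a::comm_ring_1 \<Rightarrow> 'a \<Rightarrow> 'a \<Rightarrow> 'a \<Rightarrow> 'a \<Rightarrow> 'a \<Rightarrow> 'a \<Rightarrow> 'a \<Rightarrow> 'a \<Rightarrow> 'a \<Rightarrow> bool" where
  "Txy P R b e X Y v1 v2 w1 w2 \<longleftrightarrow> (2*X + P) * w1 - b * w2 + 2 * v1^2 = 0 \<and> Y * w1 + X * w2 + 2 * v1 * v2 = 0
     \<and> - e * w1 + (2*Y + R) * w2 + 2 * v2^2 = 0"

definition Conf :: "real \<Rightarrow> real \<Rightarrow> real \<Rightarrow> real \<Rightarrow> bool" where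
  "Conf P R b e \<longleftrightarrow>
   (\<exists>Z1 Z2 X3 Y3. Vxy (complex_of_real P) (complex_of_real R) (complex_of_real b) (complex_of_real e) Z1 Z2 \<and>
       Vxy P R b e X3 Y3 \<and> det3 1 (Re Z1) (Re Z2) 0 (Im Z1) (Im Z2) 1 X3 Y3 \<noteq> 0)
 \<or> (\<exists>X1 Y1 X2 Y2 X3 Y3. Vxy P R b e X1 Y1 \<and> Vxy P R b e X2 Y2 \<and> Vxy P R b e X3 Y3 \<and> det3 1 X1 Y1 1 X2 Y2 1 X3 Y3 \<noteq> 0)
 \<or> (\<exists>X1 Y1 v1 v2 X3 Y3. Vxy P R b e X1 Y1 \<and> Jxy P R b e X1 Y1 v1 v2 \<and> Vxy P R b e X3 Y3 \<and>
       det3 1 X1 Y1 0 v1 v2 1 X3 Y3 \<noteq> 0)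
 \<or> (\<exists>X1 Y1 v1 v2 u1 u2 w1 w2. Vxy P R b e X1 Y1 \<and> Jxy P R b e X1 Y1 v1 v2 \<and> Jxy P R b e X1 Y1 u1 u2 \<and>
       Txy P R b e X1 Y1 u1 u2 w1 w2 \<and> det3 1 X1 Y1 0 v1 v2 0 w1 w2 \<noteq> 0)"

lemma Vxy_cr: "Vxy P R b e X Y \<Longrightarrow> Vxy (complex_of_real P) (complex_of_real R) (complex_of_real b) (complex_of_real e) (complex_of_real X) (complex_of_real Y)"
proof -
  assume "Vxy P R b e X Y"
  then have h: "X * (X + P) = b * (Y + R)" "X * Y = b * e" "Y * (Y + R) = e * (X + P)" unfolding Vxy_def by auto
  have "complex_of_real (X * (X + P)) = complex_of_real (b * (Y + R))"
    "complex_of_real (X * Y) = complex_of_real (b * e)" "complex_of_real (Y * (Y + R)) = complex_of_real (e * (X + P))"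
    using h by simp_all
  then show ?thesis unfolding Vxy_def by simp
qed
lemma Jxy_cr: "Jxy P R b e X Y v1 v2 \<Longrightarrow> Jxy (complex_of_real P) (complex_of_real R) (complex_of_real b) (complex_of_real e) (complex_of_real X) (complex_of_real Y) (complex_of_real v1) (complex_of_real v2)"
proof -
  assume "Jxy P R b e X Y v1 v2"
  then have h: "(2*X + P) * v1 - b * v2 = 0" "Y * v1 + X * v2 = 0" "- e * v1 + (2*Y + R) * v2 = 0" unfolding Jxy_def by auto
  have "complex_of_real ((2*X + P) * v1 - b * v2) = 0" "complex_of_real (Y * v1 + X * v2) = 0"
     "complex_of_real (- e * v1 + (2*Y + R) * v2) = 0"
    using h by simp_all
  then show ?thesis unfolding Jxy_def by simp
qed
lemma Txy_cr: "Txy P R b e X Y v1 v2 w1 w2 \<Longrightarrow> Txy (complex_of_real P) (complex_of_real R) (complex_of_real b) (complex_of_real e) (complex_of_real X) (complex_of_real Y) (complex_of_real v1) (complex_of_real v2) (complex_of_real w1) (complex_of_real w2)"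
proof -
  assume "Txy P R b e X Y v1 v2 w1 w2"
  then have h: "(2*X + P) * w1 - b * w2 + 2 * v1^2 = 0" "Y * w1 + X * w2 + 2 * v1 * v2 = 0"
     "- e * w1 + (2*Y + R) * w2 + 2 * v2^2 = 0" unfolding Txy_def by auto
  have "complex_of_real ((2*X + P) * w1 - b * w2 + 2 * v1^2) = 0" "complex_of_real (Y * w1 + X * w2 + 2 * v1 * v2) = 0"
     "complex_of_real (- e * w1 + (2*Y + R) * w2 + 2 * v2^2) = 0"
    using h by simp_all
  then show ?thesis unfolding Txy_def by simp
qed

lemma diff_eq_trans: "A - B = C - D \<Longrightarrow> C = D \<Longrightarrow> A = (B::'a::ab_group_add)"
  by (metis diff_self eq_iff_diff_eq_0)

lemma Vxy_Vc:
  fixes a b c d e f :: real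
  assumes "Vxy (complex_of_real (2*d - a)) (complex_of_real (2*c - f)) (complex_of_real b) (complex_of_real e) X Y"
  shows "Vc a b c d e f (X + complex_of_real d) (Y + complex_of_real c)"
proof -
  have h: "X * (X + complex_of_real (2*d - a)) = complex_of_real b * (Y + complex_of_real (2*c - f))"
    "X * Y = complex_of_real b * complex_of_real e"
    "Y * (Y + complex_of_real (2*c - f)) = complex_of_real e * (X + complex_of_real (2*d - a))"
    using assms unfolding Vxy_def by auto
  have 1: "(X + complex_of_real d)^2 - (complex_of_real a * (X + complex_of_real d) + complex_of_real b * (Y + complex_of_real c) - complex_of_real (r11 a b c d e f))
     = X * (X + complex_of_real (2*d - a)) - complex_of_real b * (Y + complex_of_real (2*c - f))"
    by (simp add: r11_def algebra_simps power2_eq_square)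
  have 2: "(X + complex_of_real d) * (Y + complex_of_real c) - (complex_of_real c * (X + complex_of_real d) + complex_of_real d * (Y + complex_of_real c) - complex_of_real (r12 a b c d e f))
     = X * Y - complex_of_real b * complex_of_real e"
    by (simp add: r12_def algebra_simps power2_eq_square)
  have 3: "(Y + complex_of_real c)^2 - (complex_of_real e * (X + complex_of_real d) + complex_of_real f * (Y + complex_of_real c) - complex_of_real (r22 a b c d e f))
     = Y * (Y + complex_of_real (2*c - f)) - complex_of_real e * (X + complex_of_real (2*d - a))"
    by (simp add: r22_def algebra_simps power2_eq_square)
  show ?thesis unfolding Vc_def using diff_eq_trans[OF 1 h(1)] diff_eq_trans[OF 2 h(2)] diff_eq_trans[OF 3 h(3)] by simp
qed

lemma Jxy_Jc:
  fixes a b c d e f :: real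
  assumes "Jxy (complex_of_real (2*d - a)) (complex_of_real (2*c - f)) (complex_of_real b) (complex_of_real e) X Y v1 v2"
  shows "Jc a b c d e f (X + complex_of_real d) (Y + complex_of_real c) v1 v2"
  using assms unfolding Jxy_def Jc_def by (simp add: algebra_simps)

lemma Txy_Tc:
  fixes a b c d e f :: real
  assumes "Txy (complex_of_real (2*d - a)) (complex_of_real (2*c - f)) (complex_of_real b) (complex_of_real e) X Y v1 v2 w1 w2"
  shows "Tc a b c d e f (X + complex_of_real d) (Y + complex_of_real c) v1 v2 w1 w2"
  using assms unfolding Txy_def Tc_def by (simp add: algebra_simps)

lemma det3_shiftA: "det3 1 (X1+d) (Y1+c) 1 (X2+d) (Y2+c) 1 (X3+d) (Y3+c) = det3 1 X1 Y1 1 X2 Y2 1 X3 Y3"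
  by (simp add: det3_def algebra_simps)
lemma det3_shiftB: "det3 1 (X1+d) (Y1+c) 0 v1 v2 1 (X3+d) (Y3+c) = det3 1 X1 Y1 0 v1 v2 1 X3 Y3"
  by (simp add: det3_def algebra_simps)
lemma det3_shiftC: "det3 1 (X1+d) (Y1+c) 0 v1 v2 0 w1 w2 = det3 1 X1 Y1 0 v1 v2 0 w1 w2"
  by (simp add: det3_def algebra_simps)

lemma Vc_real:
  fixes a b c d e f :: real
  assumes "Vxy (2*d - a) (2*c - f) b e X Y"
  shows "Vc a b c d e f (complex_of_real (X + d)) (complex_of_real (Y + c))"
  using Vxy_Vc[OF Vxy_cr[OF assms]] by simp

lemma Jc_real:
  fixes a b c d e f :: real
  assumes "Jxy (2*d - a) (2*c - f) b e X Y v1 v2"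
  shows "Jc a b c d e f (complex_of_real (X + d)) (complex_of_real (Y + c)) (complex_of_real v1) (complex_of_real v2)"
  using Jxy_Jc[OF Jxy_cr[OF assms]] by simp

lemma Tc_real:
  fixes a b c d e f :: real
  assumes "Txy (2*d - a) (2*c - f) b e X Y v1 v2 w1 w2"
  shows "Tc a b c d e f (complex_of_real (X + d)) (complex_of_real (Y + c)) (complex_of_real v1) (complex_of_real v2)
     (complex_of_real w1) (complex_of_real w2)"
  using Txy_Tc[OF Txy_cr[OF assms]] by simp

lemma Conf_main:
  fixes a b c d e f :: real
  assumes "Conf (2*d - a) (2*c - f) b e"
  shows "P1 a b c d e f \<and> P2 a b c d e f"
  using assms unfolding Conf_def
proof (elim disjE exE conjE)
  fix Z1 Z2 X3 Y3
  assume V1: "Vxy (complex_of_real (2*d - a)) (complex_of_real (2*c - f)) (complex_of_real b) (complex_of_real e) Z1 Z2"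
    and V3: "Vxy (2*d - a) (2*c - f) b e X3 Y3" and det: "det3 1 (Re Z1) (Re Z2) 0 (Im Z1) (Im Z2) 1 X3 Y3 \<noteq> 0"
  have "det3 1 (Re (Z1 + complex_of_real d)) (Re (Z2 + complex_of_real c)) 0 (Im (Z1 + complex_of_real d))
      (Im (Z2 + complex_of_real c)) 1 (X3 + d) (Y3 + c) \<noteq> 0"
    using det by (simp add: det3_shiftB)
  then show ?thesis by (rule F1[OF Vxy_Vc[OF V1] Vc_real[OF V3]])
next
  fix X1 Y1 X2 Y2 X3 Y3
  assume V1: "Vxy (2*d - a) (2*c - f) b e X1 Y1" and V2: "Vxy (2*d - a) (2*c - f) b e X2 Y2"
    and V3: "Vxy (2*d - a) (2*c - f) b e X3 Y3" and det: "det3 1 X1 Y1 1 X2 Y2 1 X3 Y3 \<noteq> 0"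
  have "det3 1 (X1 + d) (Y1 + c) 1 (X2 + d) (Y2 + c) 1 (X3 + d) (Y3 + c) \<noteq> 0"
    using det by (simp add: det3_shiftA)
  then show ?thesis by (rule F2[OF Vc_real[OF V1] Vc_real[OF V2] Vc_real[OF V3]])
next
  fix X1 Y1 v1 v2 X3 Y3
  assume V1: "Vxy (2*d - a) (2*c - f) b e X1 Y1" and J1: "Jxy (2*d - a) (2*c - f) b e X1 Y1 v1 v2"
    and V3: "Vxy (2*d - a) (2*c - f) b e X3 Y3" and det: "det3 1 X1 Y1 0 v1 v2 1 X3 Y3 \<noteq> 0"
  have "det3 1 (X1 + d) (Y1 + c) 0 v1 v2 1 (X3 + d) (Y3 + c) \<noteq> 0"
    using det by (simp add: det3_shiftB)
  then show ?thesis by (rule F3[OF Vc_real[OF V1] Jc_real[OF J1] Vc_real[OF V3]])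
next
  fix X1 Y1 v1 v2 u1 u2 w1 w2
  assume V1: "Vxy (2*d - a) (2*c - f) b e X1 Y1" and J1: "Jxy (2*d - a) (2*c - f) b e X1 Y1 v1 v2"
    and J2: "Jxy (2*d - a) (2*c - f) b e X1 Y1 u1 u2" and T: "Txy (2*d - a) (2*c - f) b e X1 Y1 u1 u2 w1 w2"
    and det: "det3 1 X1 Y1 0 v1 v2 0 w1 w2 \<noteq> 0"
  have "det3 1 (X1 + d) (Y1 + c) 0 v1 v2 0 w1 w2 \<noteq> 0"
    using det by (simp add: det3_shiftC)
  then show ?thesis by (rule F4[OF Vc_real[OF V1] Jc_real[OF J1] Jc_real[OF J2] Tc_real[OF T]])
qed

lemma ptb:
  fixes P R b e X :: "'a::field"
  assumes b: "b \<noteq> 0" and C: "X^3 + P * X^2 - b * R * X - b^2 * e = 0"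
  shows "Vxy P R b e X ((X^2 + P * X - b * R) / b)"
proof -
  have e: "e = (X^3 + P * X^2 - b * R * X) / b^2" using C b by (simp add: field_simps)
  show ?thesis unfolding Vxy_def using b
    by (simp add: e field_simps power2_eq_square power3_eq_cube; simp add: algebra_simps)
qed

lemma tanb:
  fixes P R b e X :: "'a::field"
  assumes b: "b \<noteq> 0" and C: "X^3 + P * X^2 - b * R * X - b^2 * e = 0" and C1: "3 * X^2 + 2 * P * X - b * R = 0"
  shows "Jxy P R b e X ((X^2 + P * X - b * R) / b) 1 ((2 * X + P) / b)"
proof -
  have e: "e = (X^3 + P * X^2 - b * R * X) / b^2" using C b by (simp add: field_simps)
  have R: "R = (3 * X^2 + 2 * P * X) / b" using C1 b by (simp add: field_simps)
  show ?thesis unfolding Jxy_def using b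
    by (simp add: e R field_simps power2_eq_square power3_eq_cube; simp add: algebra_simps)
qed

lemma trib:
  fixes P R b e X :: "'a::field"
  assumes b: "b \<noteq> 0" and C: "X^3 + P * X^2 - b * R * X - b^2 * e = 0" and C1: "3 * X^2 + 2 * P * X - b * R = 0"
    and C2: "3 * X + P = 0"
  shows "Txy P R b e X ((X^2 + P * X - b * R) / b) 1 ((2 * X + P) / b) 0 (2 / b)"
proof -
  have e: "e = (X^3 + P * X^2 - b * R * X) / b^2" using C b by (simp add: field_simps)
  have R: "R = (3 * X^2 + 2 * P * X) / b" using C1 b by (simp add: field_simps)
  have P: "P = - (3 * X)" using C2 by (simp add: eq_neg_iff_add_eq_0 add.commute)
  show ?thesis unfolding Txy_def using b
    by (simp add: e R P field_simps power2_eq_square power3_eq_cube; simp add: algebra_simps)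
qed

lemma cubic_factor:
  fixes P R b e X X0 :: "'a::comm_ring_1"
  shows "X^3 + P * X^2 - b * R * X - b^2 * e = (X - X0) * (X^2 + (P + X0) * X + (X0^2 + P * X0 - b * R))
     + (X0^3 + P * X0^2 - b * R * X0 - b^2 * e)"
  by (simp add: algebra_simps power2_eq_square power3_eq_cube)

lemma cubic_deriv:
  fixes P R b X X0 :: "'a::comm_ring_1"
  shows "3 * X^2 + 2 * P * X - b * R = (X^2 + (P + X0) * X + (X0^2 + P * X0 - b * R)) + (X - X0) * (2 * X + (P + X0))"
  by (simp add: algebra_simps power2_eq_square power3_eq_cube)

lemma K1I: "Vxy (complex_of_real P) (complex_of_real R) (complex_of_real b) (complex_of_real e) Z1 Z2 \<Longrightarrow>
   Vxy P R b e X3 Y3 \<Longrightarrow> det3 1 (Re Z1) (Re Z2) 0 (Im Z1) (Im Z2) 1 X3 Y3 \<noteq> 0 \<Longrightarrow> Conf P R b e"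
  unfolding Conf_def
  apply (rule disjI1)
  apply (rule exI[of _ Z1], rule exI[of _ Z2], rule exI[of _ X3], rule exI[of _ Y3])
  by simp
lemma K2I: "Vxy P R b e X1 Y1 \<Longrightarrow> Vxy P R b e X2 Y2 \<Longrightarrow> Vxy P R b e X3 Y3 \<Longrightarrow>
   det3 1 X1 Y1 1 X2 Y2 1 X3 Y3 \<noteq> 0 \<Longrightarrow> Conf P R b e"
  unfolding Conf_def
  apply (rule disjI2, rule disjI1)
  apply (rule exI[of _ X1], rule exI[of _ Y1], rule exI[of _ X2], rule exI[of _ Y2], rule exI[of _ X3], rule exI[of _ Y3])
  by simp
lemma K3I: "Vxy P R b e X1 Y1 \<Longrightarrow> Jxy P R b e X1 Y1 v1 v2 \<Longrightarrow> Vxy P R b e X3 Y3 \<Longrightarrow>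
   det3 1 X1 Y1 0 v1 v2 1 X3 Y3 \<noteq> 0 \<Longrightarrow> Conf P R b e"
  unfolding Conf_def
  apply (rule disjI2, rule disjI2, rule disjI1)
  apply (rule exI[of _ X1], rule exI[of _ Y1], rule exI[of _ v1], rule exI[of _ v2], rule exI[of _ X3], rule exI[of _ Y3])
  by simp
lemma K4I: "Vxy P R b e X1 Y1 \<Longrightarrow> Jxy P R b e X1 Y1 v1 v2 \<Longrightarrow> Jxy P R b e X1 Y1 u1 u2 \<Longrightarrow>
   Txy P R b e X1 Y1 u1 u2 w1 w2 \<Longrightarrow> det3 1 X1 Y1 0 v1 v2 0 w1 w2 \<noteq> 0 \<Longrightarrow> Conf P R b e"
  unfolding Conf_def
  apply (rule disjI2, rule disjI2, rule disjI2)
  apply (rule exI[of _ X1], rule exI[of _ Y1], rule exI[of _ v1], rule exI[of _ v2], rule exI[of _ u1], rule exI[of _ u2],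
      rule exI[of _ w1], rule exI[of _ w2])
  by simp

lemma Conf_0: "Conf P R 0 0"
proof (cases "P = 0")
  case True
  show ?thesis
  proof (cases "R = 0")
    case True
    show ?thesis
      by (rule K4I[of P R 0 0 0 0 1 0 0 0 0 1]) (use \<open>P = 0\<close> True in \<open>simp_all add: Vxy_def Jxy_def Txy_def det3_def\<close>)
  next
    case False
    show ?thesis
      by (rule K3I[of P R 0 0 0 0 1 0 0 "-R"]) (use \<open>P = 0\<close> False in \<open>simp_all add: Vxy_def Jxy_def det3_def\<close>)
  qed
next
  case False
  show ?thesis
  proof (cases "R = 0")
    case True
    show ?thesis
      by (rule K3I[of P R 0 0 0 0 0 1 "-P" 0]) (use \<open>P \<noteq> 0\<close> True in \<open>simp_all add: Vxy_def Jxy_def det3_def\<close>)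
  next
    case R: False
    show ?thesis
      by (rule K2I[of P R 0 0 0 0 "-P" 0 0 "-R"]) (use \<open>P \<noteq> 0\<close> R in \<open>simp_all add: Vxy_def det3_def\<close>)
  qed
qed

lemma Vxy_swap: "Vxy R P e b Y X = Vxy P R b e X Y"
  unfolding Vxy_def by (auto simp: mult.commute)
lemma Jxy_swap: "Jxy R P e b Y X v2 v1 = Jxy P R b e X Y v1 v2"
  unfolding Jxy_def by (auto simp: algebra_simps)
lemma Txy_swap: "Txy R P e b Y X v2 v1 w2 w1 = Txy P R b e X Y v1 v2 w1 w2"
  unfolding Txy_def by (auto simp: algebra_simps)

lemma Conf_swap:
  assumes "Conf R P e b"
  shows "Conf P R b e"
  using assms unfolding Conf_def[of R P e b]
  apply (elim disjE exE conjE)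
  subgoal for Z1 Z2 X3 Y3
    by (rule K1I[of P R b e Z2 Z1 Y3 X3]) (auto simp: Vxy_swap det3_def algebra_simps)
  subgoal for X1 Y1 X2 Y2 X3 Y3
    by (rule K2I[of P R b e Y1 X1 Y2 X2 Y3 X3]) (auto simp: Vxy_swap det3_def algebra_simps)
  subgoal for X1 Y1 v1 v2 X3 Y3
    by (rule K3I[of P R b e Y1 X1 v2 v1 Y3 X3]) (auto simp: Vxy_swap Jxy_swap det3_def algebra_simps)
  subgoal for X1 Y1 v1 v2 u1 u2 w1 w2
    by (rule K4I[of P R b e Y1 X1 v2 v1 u2 u1 w2 w1]) (auto simp: Vxy_swap Jxy_swap Txy_swap det3_def algebra_simps)
  done

lemma det_vand:
  fixes b :: real assumes b: "b \<noteq> 0"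
  shows "det3 1 x ((x^2 + P * x - b * R) / b) 1 y ((y^2 + P * y - b * R) / b) 1 z ((z^2 + P * z - b * R) / b)
    = (y - x) * (z - x) * (z - y) / b"
  using b by (simp add: det3_def field_simps power2_eq_square; simp add: algebra_simps)

lemma det_tan:
  fixes b :: real assumes b: "b \<noteq> 0"
  shows "det3 1 x ((x^2 + P * x - b * R) / b) 0 1 ((2 * x + P) / b) 1 z ((z^2 + P * z - b * R) / b)
    = (z - x)^2 / b"
  using b by (simp add: det3_def field_simps power2_eq_square; simp add: algebra_simps)

lemma det_tri:
  fixes b :: real assumes b: "b \<noteq> 0"
  shows "det3 1 x ((x^2 + P * x - b * R) / b) 0 1 ((2 * x + P) / b) 0 0 (2 / b) = 2 / b"
  using b by (simp add: det3_def)

lemma gZ: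
  fixes b :: real assumes b: "b \<noteq> 0"
  shows "(Complex s t ^ 2 + complex_of_real P * Complex s t - complex_of_real b * complex_of_real R) / complex_of_real b
    = Complex ((s^2 - t^2 + P * s - b * R) / b) ((2 * s * t + P * t) / b)"
  using b by (simp add: complex_eq_iff power2_eq_square field_simps)

lemma det_cplx:
  fixes b :: real assumes b: "b \<noteq> 0"
  shows "det3 1 s ((s^2 - t^2 + P * s - b * R) / b) 0 t ((2 * s * t + P * t) / b) 1 x ((x^2 + P * x - b * R) / b)
    = t * ((x - s)^2 + t^2) / b"
  using b by (simp add: det3_def field_simps power2_eq_square; simp add: algebra_simps)

lemma Conf_b:
  fixes P R b e :: real
  assumes b: "b \<noteq> 0"
  shows "Conf P R b e"
proof -
  define g where "g x = (x^2 + P * x - b * R) / b" for x :: real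
  define C where "C x = x^3 + P * x^2 - b * R * x - b^2 * e" for x :: real
  obtain X0 where "X0^3 + P * X0^2 + (-(b * R)) * X0 + (-(b^2 * e)) = 0" using cubic_root by blast
  then have C0: "C X0 = 0" by (simp add: C_def)
  define p where "p = P + X0"
  define q where "q = X0^2 + P * X0 - b * R"
  define D where "D = p^2 - 4 * q"
  have fac: "C x = (x - X0) * (x^2 + p * x + q)" for x
    using cubic_factor[of x P b R e X0] C0 by (simp add: C_def p_def q_def)
  have der: "3 * x^2 + 2 * P * x - b * R = (x^2 + p * x + q) + (x - X0) * (2 * x + p)" for x
    using cubic_deriv[of x P b R X0] by (simp add: p_def q_def)
  have pt: "C x = 0 \<Longrightarrow> Vxy P R b e x (g x)" for x
    using ptb[OF b, of x P R e] by (simp add: C_def g_def)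
  have tan: "C x = 0 \<Longrightarrow> 3 * x^2 + 2 * P * x - b * R = 0 \<Longrightarrow> Jxy P R b e x (g x) 1 ((2 * x + P) / b)" for x
    using tanb[OF b, of x P R e] by (simp add: C_def g_def)
  have V0: "Vxy P R b e X0 (g X0)" by (rule pt[OF C0])
  consider (pos) "D > 0" | (zero) "D = 0" | (neg) "D < 0" by linarith
  then show ?thesis
  proof cases
    case pos
    define r1 where "r1 = (- p + sqrt D) / 2"
    define r2 where "r2 = (- p - sqrt D) / 2"
    have sq: "(sqrt D)^2 = D" using pos by simp
    have "r1^2 + p * r1 + q = ((sqrt D)^2 - D) / 4" unfolding r1_def D_def by (simp add: field_simps power2_eq_square)
    then have q1: "r1^2 + p * r1 + q = 0" using sq by simp
    have "r2^2 + p * r2 + q = ((sqrt D)^2 - D) / 4" unfolding r2_def D_def by (simp add: field_simps power2_eq_square)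
    then have q2: "r2^2 + p * r2 + q = 0" using sq by simp
    have r12: "r1 \<noteq> r2" using pos unfolding r1_def r2_def by simp
    have C1: "C r1 = 0" using fac q1 by simp
    have C2: "C r2 = 0" using fac q2 by simp
    consider (a) "r1 \<noteq> X0" "r2 \<noteq> X0" | (b) "r1 = X0" | (c) "r2 = X0" by blast
    then show ?thesis
    proof cases
      case a
      have "det3 1 X0 (g X0) 1 r1 (g r1) 1 r2 (g r2) \<noteq> 0"
        unfolding g_def det_vand[OF b] using a r12 b by simp
      then show ?thesis by (rule K2I[OF V0 pt[OF C1] pt[OF C2]])
    next
      case bb: b
      have d0: "3 * X0^2 + 2 * P * X0 - b * R = 0" using der[of X0] q1 bb by simp
      have "r2 \<noteq> X0" using bb r12 by simp
      then have "det3 1 X0 (g X0) 0 1 ((2 * X0 + P) / b) 1 r2 (g r2) \<noteq> 0"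
        unfolding g_def det_tan[OF b] using b by simp
      then show ?thesis by (rule K3I[OF V0 tan[OF C0 d0] pt[OF C2]])
    next
      case c
      have d0: "3 * X0^2 + 2 * P * X0 - b * R = 0" using der[of X0] q2 c by simp
      have "r1 \<noteq> X0" using c r12 by simp
      then have "det3 1 X0 (g X0) 0 1 ((2 * X0 + P) / b) 1 r1 (g r1) \<noteq> 0"
        unfolding g_def det_tan[OF b] using b by simp
      then show ?thesis by (rule K3I[OF V0 tan[OF C0 d0] pt[OF C1]])
    qed
  next
    case zero
    define r where "r = - p / 2"
    have "r^2 + p * r + q = - D / 4" unfolding r_def D_def by (simp add: field_simps power2_eq_square)
    then have qr: "r^2 + p * r + q = 0" using zero by simp
    have Cr: "C r = 0" using fac qr by simp
    have 2: "2 * r + p = 0" unfolding r_def by simp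
    have dr: "3 * r^2 + 2 * P * r - b * R = 0" using der[of r] qr 2 by simp
    show ?thesis
    proof (cases "r = X0")
      case False
      then have "det3 1 r (g r) 0 1 ((2 * r + P) / b) 1 X0 (g X0) \<noteq> 0"
        unfolding g_def det_tan[OF b] using b by simp
      then show ?thesis by (rule K3I[OF pt[OF Cr] tan[OF Cr dr] V0])
    next
      case True
      have d0: "3 * X0^2 + 2 * P * X0 - b * R = 0" using dr True by simp
      have t3: "3 * X0 + P = 0" using True unfolding r_def p_def by simp
      have T: "Txy P R b e X0 (g X0) 1 ((2 * X0 + P) / b) 0 (2 / b)"
        using trib[OF b _ d0 t3] C0 by (simp add: C_def g_def)
      have "det3 1 X0 (g X0) 0 1 ((2 * X0 + P) / b) 0 0 (2 / b) \<noteq> 0"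
        unfolding g_def det_tri[OF b] using b by simp
      then show ?thesis by (rule K4I[OF V0 tan[OF C0 d0] tan[OF C0 d0] T])
    qed
  next
    case neg
    define s where "s = - p / 2"
    define t where "t = sqrt (- D) / 2"
    have sq: "(sqrt (- D))^2 = - D" using neg by simp
    have t0: "t \<noteq> 0" using neg unfolding t_def by simp
    define Z where "Z = Complex s t"
    have pq: "q * 4 - p * p > 0" using neg unfolding D_def by (simp add: power2_eq_square)
    have "Re (Z^2 + complex_of_real p * Z + complex_of_real q) = 0"
      unfolding Z_def s_def t_def D_def using pq by (simp add: power2_eq_square field_simps)
    moreover have "Im (Z^2 + complex_of_real p * Z + complex_of_real q) = 0"
      unfolding Z_def s_def t_def by (simp add: power2_eq_square field_simps)
    ultimately have qZ: "Z^2 + complex_of_real p * Z + complex_of_real q = 0"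
      by (simp add: complex_eq_iff)
    have CX0: "complex_of_real X0 ^ 3 + complex_of_real P * complex_of_real X0 ^ 2 - complex_of_real b * complex_of_real R * complex_of_real X0
        - complex_of_real b ^ 2 * complex_of_real e = 0"
    proof -
      have "complex_of_real (C X0) = 0" using C0 by simp
      then show ?thesis by (simp add: C_def)
    qed
    have "Z^3 + complex_of_real P * Z^2 - complex_of_real b * complex_of_real R * Z - complex_of_real b ^ 2 * complex_of_real e
      = (Z - complex_of_real X0) * (Z^2 + complex_of_real p * Z + complex_of_real q)"
      using cubic_factor[of Z "complex_of_real P" "complex_of_real b" "complex_of_real R" "complex_of_real e" "complex_of_real X0"] CX0
      by (simp add: p_def q_def)
    then have CZ: "Z^3 + complex_of_real P * Z^2 - complex_of_real b * complex_of_real R * Z - complex_of_real b ^ 2 * complex_of_real e = 0"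
      using qZ by simp
    have cb: "complex_of_real b \<noteq> 0" using b by simp
    have VZ: "Vxy (complex_of_real P) (complex_of_real R) (complex_of_real b) (complex_of_real e) Z
        (Complex ((s^2 - t^2 + P * s - b * R) / b) ((2 * s * t + P * t) / b))"
      using ptb[OF cb CZ] unfolding Z_def gZ[OF b] .
    have "det3 1 (Re Z) (Re (Complex ((s^2 - t^2 + P * s - b * R) / b) ((2 * s * t + P * t) / b)))
        0 (Im Z) (Im (Complex ((s^2 - t^2 + P * s - b * R) / b) ((2 * s * t + P * t) / b))) 1 X0 (g X0) \<noteq> 0"
    proof -
      have "(X0 - s)^2 + t^2 > 0" using t0 by (simp add: add_nonneg_pos)
      then show ?thesis unfolding Z_def g_def using det_cplx[OF b, of s t P R X0] t0 b by simp
    qed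
    then show ?thesis by (rule K1I[OF VZ V0])
  qed
qed

lemma Conf_all: "Conf P R b e"
proof (cases "b = 0")
  case False then show ?thesis by (rule Conf_b)
next
  case True
  show ?thesis
  proof (cases "e = 0")
    case True then show ?thesis using \<open>b = 0\<close> Conf_0 by simp
  next
    case False
    then have "Conf R P e b" by (rule Conf_b)
    then show ?thesis by (rule Conf_swap)
  qed
qed

theorem theorem2p2:
  fixes a b c d e f :: real
  defines "G \<equiv> GammaA a b c d e f"
  shows
   "(\<exists>B. fin_basis (QEc G) B \<and>
       (\<forall>u\<in>B. \<exists>(\<alpha>1::complex) \<alpha>2 (p0::complex) p1 p2 p3 p4 p5.
          (\<lambda>(x, y). exp (\<alpha>1 * complex_of_real x + \<alpha>2 * complex_of_real y)) \<in> QEc G \<and>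
          u = (\<lambda>(x, y). exp (\<alpha>1 * complex_of_real x + \<alpha>2 * complex_of_real y) *
                 (p0 + p1 * complex_of_real x + p2 * complex_of_real y + p3 * (complex_of_real x)\<^sup>2
                  + p4 * complex_of_real x * complex_of_real y + p5 * (complex_of_real y)\<^sup>2))))
    \<and>
    (\<exists>L1 L2 L3 Q B. real_linear_fn L1 \<and> real_linear_fn L2 \<and> real_linear_fn L3 \<and> real_poly_deg2 Q \<and>
       fin_basis (QE G) B \<and>
       (B = {(\<lambda>p. exp (L1 p) * cos (L2 p)), (\<lambda>p. exp (L1 p) * sin (L2 p)), (\<lambda>p. exp (L3 p))}
      \<or> B = {(\<lambda>p. exp (L1 p)), (\<lambda>p. exp (L2 p)), (\<lambda>p. exp (L3 p))}
      \<or> B = {(\<lambda>p. exp (L1 p)), (\<lambda>p. L2 p * exp (L1 p)), (\<lambda>p. exp (L3 p))}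
      \<or> B = {(\<lambda>p. exp (L1 p)), (\<lambda>p. L2 p * exp (L1 p)), (\<lambda>p. Q p * exp (L1 p))}))"
  unfolding G_def by (rule Conf_main[OF Conf_all, unfolded P1_def P2_def])

end
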